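(* Let $\phi$ be a formula well-formed in $\Sigma$ and $a,b$ terms of a common name type well-typed in $\Sigma$. In the sequent calculus $NL^{\Rightarrow}$: if $\Sigma;\Gamma,(a\;b)\cdot\phi\Rightarrow\Delta$ is derivable, then $\Sigma;\Gamma,\phi\Rightarrow\Delta$ has a derivation of the same logical height; and if $\Sigma;\Gamma\Rightarrow(a\;b)\cdot\phi,\Delta$ is derivable, then $\Sigma;\Gamma\Rightarrow\phi,\Delta$ has a derivation of the same logical height.
   Context: Types $\tau ::= \delta \mid \nu \mid \langle\nu\rangle\tau$ ($\delta$ data types, $\nu$ name types). Terms $t ::= x \mid \mathsf{a} \mid c \mid f(\vec t)$ over variables $x$ and a disjoint countably infinite set of name-symbols $\mathsf a$; the signature contains, for all $\nu,\tau$, swapping $(a\;b)\cdot t$, abstraction $\langle a\rangle t$, equality $t\approx u$, freshness $a\#t$, besides constants $c$, function symbols $f$, relation symbols $p$. Formulas: $\top,\bot$, atoms, $\wedge,\vee,\supset,\forall x{:}\tau,\exists x{:}\tau$, and $\mathsf N\mathsf a{:}\nu.\phi$ (binding the name-symbol $\mathsf a$). Swapping on formulas: $(a\;b)\cdot\top=\top$, $(a\;b)\cdot\bot=\bot$, $(a\;b)\cdot p(\vec t)=p((a\;b)\cdot\vec t)$, commuting with $\wedge,\vee,\supset$, with $\forall x,\exists x$ (for $x$ not free in $a,b$) and with $\mathsf N\mathsf a$ (for $\mathsf a$ not occurring in $a,b$). Contexts $\Sigma::=\cdot\mid\Sigma,x{:}\tau\mid\Sigma\#\mathsf a{:}\nu$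 (no symbol twice; $\Sigma\#\mathsf a{:}\nu$ means $\mathsf a$ is fresh for everything in $\Sigma$); $Tm_\Sigma$ = terms well-typed in $\Sigma$; $|\cdot|=\emptyset$, $|\Sigma,x{:}\tau|=|\Sigma|$, $|\Sigma\#\mathsf a{:}\nu|=|\Sigma|\cup\{\mathsf a\#t\mid t\in Tm_\Sigma\}$. Rules of $NL^{\Rightarrow}$ for $\Sigma;\Gamma\Rightarrow\Delta$: (i) classical G3c rules: initial sequents $\Sigma;\Gamma,P\Rightarrow P,\Delta$ ($P$ atomic), $\top R$, $\bot L$, context-sharing left/right rules for $\wedge,\vee,\supset,\forall,\exists$; (ii) $\mathsf N R$: from $\Sigma\#\mathsf a{:}\nu;\Gamma\Rightarrow\phi,\Delta$ infer $\Sigma;\Gamma\Rightarrow\mathsf N\mathsf a{:}\nu.\phi,\Delta$; $\mathsf N L$: from $\Sigma\#\mathsf a{:}\nu;\Gamma,\phi\Rightarrow\Delta$ infer $\Sigma;\Gamma,\mathsf N\mathsf a{:}\nu.\phi\Rightarrow\Delta$ ($\mathsf a\notin\Sigma$); (iii) nonlogical rules: $\approx R$: from $\Sigma;\Gamma,t\approx t\Rightarrow\Delta$ infer $\Sigma;\Gamma\Rightarrow\Delta$; $\approx S$: from $\Sigma;\Gamma,t\approx u,P(t),P(u)\Rightarrow\Delta$ infer $\Sigma;\Gamma,t\approx u,P(t)\Rightarrow\Delta$; for each instance $\bigwedge_j P_j\supset\bigvee_{i\le m}Q_i$ of (S1) $(a\;a)\cdot x\approx x$, (S2) $(a\;b)\cdot(a\;b)\cdot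 x\approx x$, (S3) $(a\;b)\cdot a\approx b$, (E1) $(a\;b)\cdot c\approx c$, (E2) $(a\;b)\cdot f(\vec t)\approx f((a\;b)\cdot\vec t)$, (E3) $p(\vec t)\supset p((a\;b)\cdot\vec t)$, (F1) $a\#x\wedge b\#x\supset(a\;b)\cdot x\approx x$, (F2) $a\#b$ ($a,b$ of distinct name types), (F3) $a\#a\supset\bot$, (F4) $a\#b\vee a\approx b$, (A1) $a\#y\wedge x\approx(a\;b)\cdot y\supset\langle a\rangle x\approx\langle b\rangle y$ (arbitrary well-typed terms), the rule: from $\Sigma;\Gamma,\vec P,Q_i\Rightarrow\Delta$ for all $i$ infer $\Sigma;\Gamma,\vec P\Rightarrow\Delta$; (A2) from $\Sigma;\Gamma,E,a\approx b,t\approx u\Rightarrow\Delta$ and $\Sigma;\Gamma,E,a\#u,t\approx(a\;b)\cdot u\Rightarrow\Delta$ infer $\Sigma;\Gamma,E\Rightarrow\Delta$, $E$ being $\langle a\rangle t\approx\langle b\rangle u$; (A3) from $\Sigma\vdash t:\langle\nu\rangle\sigma$ and $\Sigma,a{:}\nu,x{:}\sigma;\Gamma,t\approx\langle a\rangle x\Rightarrow\Delta$ ($a,x\notin\Sigma$) infer $\Sigma;\Gamma\Rightarrow\Delta$; (F) from $\Sigma\#\mathsf a{:}\nu;\Gamma\Rightarrow\Delta$ ($\mathsf a\notin\Sigma$) infer $\Sigma;\Gamma\Rightarrow\Delta$; ($\Sigma\#$) from $\Sigma;\Gamma,\mathsf a\#t\Rightarrow\Delta$ with $\mathsf a\#t\in|\Sigma|$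 infer $\Sigma;\Gamma\Rightarrow\Delta$. The rules in (i) and (ii) are the logical rules; the logical height of a derivation is the maximum number of logical rules on any branch. *)

theory Defs
  imports Main "HOL-Library.Multiset"
begin

section \<open>Syntax of nominal logic (locally nameless representation)\<close>

datatype ty = DTy nat | NTy nat | ATy nat ty

text \<open>Free variables FV x, name-symbols NS a (a separate, disjoint supply),
  bound variables BV i and bound name-symbols BN i (de Bruijn indices, used only
  under the binders All/Ex resp. New), constants, function symbols,
  swapping (a b).t and abstraction <a>t.\<close>
datatype trm =
    BV nat | FV nat | BN nat | NS nat
  | Cst nat | Fn nat "trm list"
  | Swp trm trm trm
  | Abst trm trm

text \<open>Formulas. All/Ex bind a variable of the given type, New binds a name-symbol
  of the given name type (index).\<close>
datatype fm =
    Top | Bot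
  | Eq trm trm | Fr trm trm | Rel nat "trm list"
  | And fm fm | Or fm fm | Imp fm fm
  | All ty fm | Ex ty fm | New nat fm

record sig =
  cty :: "nat \<Rightarrow> ty"
  fty :: "nat \<Rightarrow> ty list \<times> ty"
  pty :: "nat \<Rightarrow> ty list"

text \<open>Context entries: x:tau, and #a:nu (name-symbol a of name type nu).\<close>
datatype centry = CVar nat ty | CName nat nat

type_synonym ctx = "centry list"

fun ent_vars :: "centry \<Rightarrow> nat list" where
  "ent_vars (CVar x _) = [x]"
| "ent_vars (CName _ _) = []"

fun ent_names :: "centry \<Rightarrow> nat list" where
  "ent_names (CVar _ _) = []"
| "ent_names (CName a _) = [a]"

definition cvars :: "ctx \<Rightarrow> nat set" where
  "cvars G = set (concat (map ent_vars G))"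

definition cnames :: "ctx \<Rightarrow> nat set" where
  "cnames G = set (concat (map ent_names G))"

definition ctx_ok :: "ctx \<Rightarrow> bool" where
  "ctx_ok G \<longleftrightarrow> distinct (concat (map ent_vars G)) \<and> distinct (concat (map ent_names G))"

fun fv_t :: "trm \<Rightarrow> nat set" where
  "fv_t (BV i) = {}" | "fv_t (FV x) = {x}" | "fv_t (BN i) = {}" | "fv_t (NS a) = {}"
| "fv_t (Cst c) = {}" | "fv_t (Fn f ts) = (\<Union>t\<in>set ts. fv_t t)"
| "fv_t (Swp a b t) = fv_t a \<union> fv_t b \<union> fv_t t"
| "fv_t (Abst a t) = fv_t a \<union> fv_t t"

fun fn_t :: "trm \<Rightarrow> nat set" where
  "fn_t (BV i) = {}" | "fn_t (FV x) = {}" | "fn_t (BN i) = {}" | "fn_t (NS a) = {a}"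
| "fn_t (Cst c) = {}" | "fn_t (Fn f ts) = (\<Union>t\<in>set ts. fn_t t)"
| "fn_t (Swp a b t) = fn_t a \<union> fn_t b \<union> fn_t t"
| "fn_t (Abst a t) = fn_t a \<union> fn_t t"

fun fv_f :: "fm \<Rightarrow> nat set" where
  "fv_f Top = {}" | "fv_f Bot = {}"
| "fv_f (Eq t u) = fv_t t \<union> fv_t u" | "fv_f (Fr t u) = fv_t t \<union> fv_t u"
| "fv_f (Rel p ts) = (\<Union>t\<in>set ts. fv_t t)"
| "fv_f (And A B) = fv_f A \<union> fv_f B" | "fv_f (Or A B) = fv_f A \<union> fv_f B"
| "fv_f (Imp A B) = fv_f A \<union> fv_f B"
| "fv_f (All T A) = fv_f A" | "fv_f (Ex T A) = fv_f A" | "fv_f (New v A) = fv_f A"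

fun fn_f :: "fm \<Rightarrow> nat set" where
  "fn_f Top = {}" | "fn_f Bot = {}"
| "fn_f (Eq t u) = fn_t t \<union> fn_t u" | "fn_f (Fr t u) = fn_t t \<union> fn_t u"
| "fn_f (Rel p ts) = (\<Union>t\<in>set ts. fn_t t)"
| "fn_f (And A B) = fn_f A \<union> fn_f B" | "fn_f (Or A B) = fn_f A \<union> fn_f B"
| "fn_f (Imp A B) = fn_f A \<union> fn_f B"
| "fn_f (All T A) = fn_f A" | "fn_f (Ex T A) = fn_f A" | "fn_f (New v A) = fn_f A"

definition fv_ms :: "fm multiset \<Rightarrow> nat set" where
  "fv_ms M = (\<Union>A\<in>set_mset M. fv_f A)"

definition fn_ms :: "fm multiset \<Rightarrow> nat set" where
  "fn_ms M = (\<Union>A\<in>set_mset M. fn_f A)"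

fun openv_t :: "nat \<Rightarrow> trm \<Rightarrow> trm \<Rightarrow> trm" where
  "openv_t k s (BV i) = (if i = k then s else BV i)"
| "openv_t k s (FV x) = FV x" | "openv_t k s (BN i) = BN i" | "openv_t k s (NS a) = NS a"
| "openv_t k s (Cst c) = Cst c"
| "openv_t k s (Fn f ts) = Fn f (map (openv_t k s) ts)"
| "openv_t k s (Swp a b t) = Swp (openv_t k s a) (openv_t k s b) (openv_t k s t)"
| "openv_t k s (Abst a t) = Abst (openv_t k s a) (openv_t k s t)"

fun openv :: "nat \<Rightarrow> trm \<Rightarrow> fm \<Rightarrow> fm" where
  "openv k s Top = Top" | "openv k s Bot = Bot"
| "openv k s (Eq t u) = Eq (openv_t k s t) (openv_t k s u)"
| "openv k s (Fr t u) = Fr (openv_t k s t) (openv_t k s u)"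
| "openv k s (Rel p ts) = Rel p (map (openv_t k s) ts)"
| "openv k s (And A B) = And (openv k s A) (openv k s B)"
| "openv k s (Or A B) = Or (openv k s A) (openv k s B)"
| "openv k s (Imp A B) = Imp (openv k s A) (openv k s B)"
| "openv k s (All T A) = All T (openv (Suc k) s A)"
| "openv k s (Ex T A) = Ex T (openv (Suc k) s A)"
| "openv k s (New v A) = New v (openv k s A)"

fun openn_t :: "nat \<Rightarrow> nat \<Rightarrow> trm \<Rightarrow> trm" where
  "openn_t k a (BV i) = BV i" | "openn_t k a (FV x) = FV x"
| "openn_t k a (BN i) = (if i = k then NS a else BN i)" | "openn_t k a (NS b) = NS b"
| "openn_t k a (Cst c) = Cst c"
| "openn_t k a (Fn f ts) = Fn f (map (openn_t k a) ts)"
| "openn_t k a (Swp b c t) = Swp (openn_t k a b) (openn_t k a c) (openn_t k a t)"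
| "openn_t k a (Abst b t) = Abst (openn_t k a b) (openn_t k a t)"

fun openn :: "nat \<Rightarrow> nat \<Rightarrow> fm \<Rightarrow> fm" where
  "openn k a Top = Top" | "openn k a Bot = Bot"
| "openn k a (Eq t u) = Eq (openn_t k a t) (openn_t k a u)"
| "openn k a (Fr t u) = Fr (openn_t k a t) (openn_t k a u)"
| "openn k a (Rel p ts) = Rel p (map (openn_t k a) ts)"
| "openn k a (And A B) = And (openn k a A) (openn k a B)"
| "openn k a (Or A B) = Or (openn k a A) (openn k a B)"
| "openn k a (Imp A B) = Imp (openn k a A) (openn k a B)"
| "openn k a (All T A) = All T (openn k a A)"
| "openn k a (Ex T A) = Ex T (openn k a A)"
| "openn k a (New v A) = New v (openn (Suc k) a A)"

fun subst_t :: "nat \<Rightarrow> trm \<Rightarrow> trm \<Rightarrow> trm" where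
  "subst_t x s (BV i) = BV i"
| "subst_t x s (FV y) = (if y = x then s else FV y)"
| "subst_t x s (BN i) = BN i" | "subst_t x s (NS a) = NS a"
| "subst_t x s (Cst c) = Cst c"
| "subst_t x s (Fn f ts) = Fn f (map (subst_t x s) ts)"
| "subst_t x s (Swp a b t) = Swp (subst_t x s a) (subst_t x s b) (subst_t x s t)"
| "subst_t x s (Abst a t) = Abst (subst_t x s a) (subst_t x s t)"

fun is_atom :: "fm \<Rightarrow> bool" where
  "is_atom (Eq t u) = True" | "is_atom (Fr t u) = True" | "is_atom (Rel p ts) = True"
| "is_atom _ = False"

fun subst_at :: "nat \<Rightarrow> trm \<Rightarrow> fm \<Rightarrow> fm" where
  "subst_at x s (Eq t u) = Eq (subst_t x s t) (subst_t x s u)"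
| "subst_at x s (Fr t u) = Fr (subst_t x s t) (subst_t x s u)"
| "subst_at x s (Rel p ts) = Rel p (map (subst_t x s) ts)"
| "subst_at x s A = A"

text \<open>Swapping on formulas: (a b).phi.  Since the terms a, b are locally closed,
  swapping commutes with all binders.\<close>
fun fswap :: "trm \<Rightarrow> trm \<Rightarrow> fm \<Rightarrow> fm" where
  "fswap a b Top = Top" | "fswap a b Bot = Bot"
| "fswap a b (Eq t u) = Eq (Swp a b t) (Swp a b u)"
| "fswap a b (Fr t u) = Fr (Swp a b t) (Swp a b u)"
| "fswap a b (Rel p ts) = Rel p (map (Swp a b) ts)"
| "fswap a b (And A B) = And (fswap a b A) (fswap a b B)"
| "fswap a b (Or A B) = Or (fswap a b A) (fswap a b B)"
| "fswap a b (Imp A B) = Imp (fswap a b A) (fswap a b B)"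
| "fswap a b (All T A) = All T (fswap a b A)"
| "fswap a b (Ex T A) = Ex T (fswap a b A)"
| "fswap a b (New v A) = New v (fswap a b A)"

inductive has_ty :: "sig \<Rightarrow> ctx \<Rightarrow> trm \<Rightarrow> ty \<Rightarrow> bool" for S :: sig where
  typ_FV: "CVar x T \<in> set G \<Longrightarrow> has_ty S G (FV x) T"
| typ_NS: "CName a v \<in> set G \<Longrightarrow> has_ty S G (NS a) (NTy v)"
| typ_Cst: "has_ty S G (Cst c) (cty S c)"
| typ_Fn: "fty S f = (Ts, T) \<Longrightarrow> list_all2 (has_ty S G) ts Ts \<Longrightarrow> has_ty S G (Fn f ts) T"
| typ_Swp: "has_ty S G a (NTy v) \<Longrightarrow> has_ty S G b (NTy v) \<Longrightarrow> has_ty S G t T \<Longrightarrow> has_ty S G (Swp a b t) T"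
| typ_Abst: "has_ty S G a (NTy v) \<Longrightarrow> has_ty S G t T \<Longrightarrow> has_ty S G (Abst a t) (ATy v T)"

inductive wf_fm :: "sig \<Rightarrow> ctx \<Rightarrow> fm \<Rightarrow> bool" for S :: sig where
  wf_Top: "wf_fm S G Top"
| wf_Bot: "wf_fm S G Bot"
| wf_Eq: "has_ty S G t T \<Longrightarrow> has_ty S G u T \<Longrightarrow> wf_fm S G (Eq t u)"
| wf_Fr: "has_ty S G a (NTy v) \<Longrightarrow> has_ty S G t T \<Longrightarrow> wf_fm S G (Fr a t)"
| wf_Rel: "list_all2 (has_ty S G) ts (pty S p) \<Longrightarrow> wf_fm S G (Rel p ts)"
| wf_And: "wf_fm S G A \<Longrightarrow> wf_fm S G B \<Longrightarrow> wf_fm S G (And A B)"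
| wf_Or: "wf_fm S G A \<Longrightarrow> wf_fm S G B \<Longrightarrow> wf_fm S G (Or A B)"
| wf_Imp: "wf_fm S G A \<Longrightarrow> wf_fm S G B \<Longrightarrow> wf_fm S G (Imp A B)"
| wf_All: "(\<And>x. x \<notin> cvars G \<Longrightarrow> wf_fm S (G @ [CVar x T]) (openv 0 (FV x) A)) \<Longrightarrow> wf_fm S G (All T A)"
| wf_Ex: "(\<And>x. x \<notin> cvars G \<Longrightarrow> wf_fm S (G @ [CVar x T]) (openv 0 (FV x) A)) \<Longrightarrow> wf_fm S G (Ex T A)"
| wf_New: "(\<And>a. a \<notin> cnames G \<Longrightarrow> wf_fm S (G @ [CName a v]) (openn 0 a A)) \<Longrightarrow> wf_fm S G (New v A)"

text \<open>The freshness information |Sigma| of a context: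
  |Sigma # a:nu| contains a # t for every t in Tm_Sigma.\<close>
definition ctx_fresh :: "sig \<Rightarrow> ctx \<Rightarrow> fm set" where
  "ctx_fresh S G = {Fr (NS a) t | a t. \<exists>G1 G2 v T. G = G1 @ [CName a v] @ G2 \<and> has_ty S G1 t T}"

text \<open>der S G Gam Del n: the sequent G; Gam => Del has a derivation of logical
  height at most n.  Logical rules (G3c rules and the N rules) increase the height
  by one; zero-premise rules have height 0; nonlogical rules do not count.\<close>

inductive der :: "sig \<Rightarrow> ctx \<Rightarrow> fm multiset \<Rightarrow> fm multiset \<Rightarrow> nat \<Rightarrow> bool" for S :: sig where
  Init: "is_atom P \<Longrightarrow> der S G (Gam + {#P#}) (Del + {#P#}) n"
| TopR: "der S G Gam (Del + {#Top#}) n"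
| BotL: "der S G (Gam + {#Bot#}) Del n"
| AndL: "der S G (Gam + {#A, B#}) Del n \<Longrightarrow> der S G (Gam + {#And A B#}) Del (Suc n)"
| AndR: "der S G Gam (Del + {#A#}) n \<Longrightarrow> der S G Gam (Del + {#B#}) n
         \<Longrightarrow> der S G Gam (Del + {#And A B#}) (Suc n)"
| OrL: "der S G (Gam + {#A#}) Del n \<Longrightarrow> der S G (Gam + {#B#}) Del n
         \<Longrightarrow> der S G (Gam + {#Or A B#}) Del (Suc n)"
| OrR: "der S G Gam (Del + {#A, B#}) n \<Longrightarrow> der S G Gam (Del + {#Or A B#}) (Suc n)"
| ImpL: "der S G Gam (Del + {#A#}) n \<Longrightarrow> der S G (Gam + {#B#}) Del n
         \<Longrightarrow> der S G (Gam + {#Imp A B#}) Del (Suc n)"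
| ImpR: "der S G (Gam + {#A#}) (Del + {#B#}) n \<Longrightarrow> der S G Gam (Del + {#Imp A B#}) (Suc n)"
| AllL: "has_ty S G t T \<Longrightarrow> der S G (Gam + {#All T A, openv 0 t A#}) Del n
         \<Longrightarrow> der S G (Gam + {#All T A#}) Del (Suc n)"
| AllR: "y \<notin> cvars G \<Longrightarrow> y \<notin> fv_ms Gam \<Longrightarrow> y \<notin> fv_ms Del \<Longrightarrow> y \<notin> fv_f A
         \<Longrightarrow> der S (G @ [CVar y T]) Gam (Del + {#openv 0 (FV y) A#}) n
         \<Longrightarrow> der S G Gam (Del + {#All T A#}) (Suc n)"
| ExL: "y \<notin> cvars G \<Longrightarrow> y \<notin> fv_ms Gam \<Longrightarrow> y \<notin> fv_ms Del \<Longrightarrow> y \<notin> fv_f A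
         \<Longrightarrow> der S (G @ [CVar y T]) (Gam + {#openv 0 (FV y) A#}) Del n
         \<Longrightarrow> der S G (Gam + {#Ex T A#}) Del (Suc n)"
| ExR: "has_ty S G t T \<Longrightarrow> der S G Gam (Del + {#Ex T A, openv 0 t A#}) n
         \<Longrightarrow> der S G Gam (Del + {#Ex T A#}) (Suc n)"
| NR: "a \<notin> cnames G \<Longrightarrow> a \<notin> fn_ms Gam \<Longrightarrow> a \<notin> fn_ms Del \<Longrightarrow> a \<notin> fn_f A
         \<Longrightarrow> der S (G @ [CName a v]) Gam (Del + {#openn 0 a A#}) n
         \<Longrightarrow> der S G Gam (Del + {#New v A#}) (Suc n)"
| NL: "a \<notin> cnames G \<Longrightarrow> a \<notin> fn_ms Gam \<Longrightarrow> a \<notin> fn_ms Del \<Longrightarrow> a \<notin> fn_f A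
         \<Longrightarrow> der S (G @ [CName a v]) (Gam + {#openn 0 a A#}) Del n
         \<Longrightarrow> der S G (Gam + {#New v A#}) Del (Suc n)"
| EqR: "has_ty S G t T \<Longrightarrow> der S G (Gam + {#Eq t t#}) Del n \<Longrightarrow> der S G Gam Del n"
| EqS: "is_atom P \<Longrightarrow> der S G (Gam + {#Eq t u, subst_at x t P, subst_at x u P#}) Del n
         \<Longrightarrow> der S G (Gam + {#Eq t u, subst_at x t P#}) Del n"
| S1: "has_ty S G a (NTy v) \<Longrightarrow> has_ty S G x T
         \<Longrightarrow> der S G (Gam + {#Eq (Swp a a x) x#}) Del n \<Longrightarrow> der S G Gam Del n"
| S2: "has_ty S G a (NTy v) \<Longrightarrow> has_ty S G b (NTy v) \<Longrightarrow> has_ty S G x T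
         \<Longrightarrow> der S G (Gam + {#Eq (Swp a b (Swp a b x)) x#}) Del n \<Longrightarrow> der S G Gam Del n"
| S3: "has_ty S G a (NTy v) \<Longrightarrow> has_ty S G b (NTy v)
         \<Longrightarrow> der S G (Gam + {#Eq (Swp a b a) b#}) Del n \<Longrightarrow> der S G Gam Del n"
| E1: "has_ty S G a (NTy v) \<Longrightarrow> has_ty S G b (NTy v)
         \<Longrightarrow> der S G (Gam + {#Eq (Swp a b (Cst c)) (Cst c)#}) Del n \<Longrightarrow> der S G Gam Del n"
| E2: "has_ty S G a (NTy v) \<Longrightarrow> has_ty S G b (NTy v) \<Longrightarrow> has_ty S G (Fn f ts) T
         \<Longrightarrow> der S G (Gam + {#Eq (Swp a b (Fn f ts)) (Fn f (map (Swp a b) ts))#}) Del n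
         \<Longrightarrow> der S G Gam Del n"
| E2_swap: "has_ty S G a (NTy v) \<Longrightarrow> has_ty S G b (NTy v) \<Longrightarrow> has_ty S G (Swp c d t) T
         \<Longrightarrow> der S G (Gam + {#Eq (Swp a b (Swp c d t)) (Swp (Swp a b c) (Swp a b d) (Swp a b t))#}) Del n
         \<Longrightarrow> der S G Gam Del n"
| E2_abs: "has_ty S G a (NTy v) \<Longrightarrow> has_ty S G b (NTy v) \<Longrightarrow> has_ty S G (Abst c t) T
         \<Longrightarrow> der S G (Gam + {#Eq (Swp a b (Abst c t)) (Abst (Swp a b c) (Swp a b t))#}) Del n
         \<Longrightarrow> der S G Gam Del n"
| E3: "is_atom P \<Longrightarrow> wf_fm S G P \<Longrightarrow> has_ty S G a (NTy v) \<Longrightarrow> has_ty S G b (NTy v)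
         \<Longrightarrow> der S G (Gam + {#P, fswap a b P#}) Del n \<Longrightarrow> der S G (Gam + {#P#}) Del n"
| F1: "has_ty S G a (NTy v) \<Longrightarrow> has_ty S G b (NTy v) \<Longrightarrow> has_ty S G x T
         \<Longrightarrow> der S G (Gam + {#Fr a x, Fr b x, Eq (Swp a b x) x#}) Del n
         \<Longrightarrow> der S G (Gam + {#Fr a x, Fr b x#}) Del n"
| F2: "has_ty S G a (NTy v) \<Longrightarrow> has_ty S G b (NTy w) \<Longrightarrow> v \<noteq> w
         \<Longrightarrow> der S G (Gam + {#Fr a b#}) Del n \<Longrightarrow> der S G Gam Del n"
| F3: "has_ty S G a (NTy v) \<Longrightarrow> der S G (Gam + {#Fr a a#}) Del n"
| F4: "has_ty S G a (NTy v) \<Longrightarrow> has_ty S G b (NTy v)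
         \<Longrightarrow> der S G (Gam + {#Fr a b#}) Del n \<Longrightarrow> der S G (Gam + {#Eq a b#}) Del n
         \<Longrightarrow> der S G Gam Del n"
| A1: "has_ty S G a (NTy v) \<Longrightarrow> has_ty S G b (NTy v) \<Longrightarrow> has_ty S G x T \<Longrightarrow> has_ty S G y T
         \<Longrightarrow> der S G (Gam + {#Fr a y, Eq x (Swp a b y), Eq (Abst a x) (Abst b y)#}) Del n
         \<Longrightarrow> der S G (Gam + {#Fr a y, Eq x (Swp a b y)#}) Del n"
| A2: "der S G (Gam + {#Eq (Abst a t) (Abst b u), Eq a b, Eq t u#}) Del n
         \<Longrightarrow> der S G (Gam + {#Eq (Abst a t) (Abst b u), Fr a u, Eq t (Swp a b u)#}) Del n
         \<Longrightarrow> der S G (Gam + {#Eq (Abst a t) (Abst b u)#}) Del n"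
| A3: "has_ty S G t (ATy v T) \<Longrightarrow> a \<notin> cvars G \<Longrightarrow> x \<notin> cvars G \<Longrightarrow> a \<noteq> x
         \<Longrightarrow> a \<notin> fv_ms Gam \<union> fv_ms Del \<Longrightarrow> x \<notin> fv_ms Gam \<union> fv_ms Del
         \<Longrightarrow> der S (G @ [CVar a (NTy v), CVar x T]) (Gam + {#Eq t (Abst (FV a) (FV x))#}) Del n
         \<Longrightarrow> der S G Gam Del n"
| F: "a \<notin> cnames G \<Longrightarrow> a \<notin> fn_ms Gam \<Longrightarrow> a \<notin> fn_ms Del
         \<Longrightarrow> der S (G @ [CName a v]) Gam Del n \<Longrightarrow> der S G Gam Del n"
| CtxFresh: "Fr (NS a) t \<in> ctx_fresh S G \<Longrightarrow> der S G (Gam + {#Fr (NS a) t#}) Del n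
         \<Longrightarrow> der S G Gam Del n"

end

theory Submission
  imports Defs
begin


lemma finite_fv_t[simp]: "finite (fv_t t)" and finite_fn_t[simp]: "finite (fn_t t)"
  by (induction t) auto
lemma finite_fv_f[simp]: "finite (fv_f A)" and finite_fn_f[simp]: "finite (fn_f A)"
  by (induction A) auto
lemma finite_cvars[simp]: "finite (cvars G)" and finite_cnames[simp]: "finite (cnames G)"
  by (auto simp: cvars_def cnames_def)

lemma cvars_iff: "x \<in> cvars G \<longleftrightarrow> (\<exists>T. CVar x T \<in> set G)"
proof -
  have "x \<in> set (ent_vars e) \<longleftrightarrow> (\<exists>T. e = CVar x T)" for e by (cases e) auto
  thus ?thesis by (auto simp: cvars_def)
qed
lemma cnames_iff: "a \<in> cnames G \<longleftrightarrow> (\<exists>v. CName a v \<in> set G)"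
proof -
  have "a \<in> set (ent_names e) \<longleftrightarrow> (\<exists>v. e = CName a v)" for e by (cases e) auto
  thus ?thesis by (auto simp: cnames_def)
qed
lemma cvars_app[simp]: "cvars (G @ H) = cvars G \<union> cvars H" by (auto simp: cvars_def)
lemma cnames_app[simp]: "cnames (G @ H) = cnames G \<union> cnames H" by (auto simp: cnames_def)
lemma cvars_simps[simp]: "cvars [CVar x T] = {x}" "cvars [CName a v] = {}"
  by (auto simp: cvars_def)
lemma cnames_simps[simp]: "cnames [CVar x T] = {}" "cnames [CName a v] = {a}"
  by (auto simp: cnames_def)

lemma ex_fresh: "finite (X::nat set) \<Longrightarrow> \<exists>x. x \<notin> X"
  using infinite_UNIV_nat ex_new_if_finite by auto

lemma l2ex: "list_all2 P xs ys \<Longrightarrow> x \<in> set xs \<Longrightarrow> \<exists>y. P x y"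
  by (induction xs ys rule: list_all2_induct) auto

lemma has_ty_mono: "has_ty S G t T \<Longrightarrow> set G \<subseteq> set G' \<Longrightarrow> has_ty S G' t T"
proof (induction rule: has_ty.induct)
  case (typ_Fn f Ts T G ts) then show ?case
    by (auto intro!: has_ty.typ_Fn elim!: list.rel_mono_strong)
qed (auto intro: has_ty.intros)

lemma has_ty_props: "has_ty S G t T \<Longrightarrow> (\<forall>k s. openv_t k s t = t) \<and> (\<forall>k c. openn_t k c t = t)
   \<and> fv_t t \<subseteq> cvars G \<and> fn_t t \<subseteq> cnames G"
proof (induction rule: has_ty.induct)
  case (typ_Fn f Ts T G ts)
  hence "\<forall>t\<in>set ts. (\<forall>k s. openv_t k s t = t) \<and> (\<forall>k c. openn_t k c t = t)
   \<and> fv_t t \<subseteq> cvars G \<and> fn_t t \<subseteq> cnames G"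
    by (auto dest: l2ex)
  then show ?case by (auto intro: map_idI)
qed (auto simp: cvars_iff cnames_iff)

lemma wf_mono: "wf_fm S G A \<Longrightarrow> set G \<subseteq> set G' \<Longrightarrow> wf_fm S G' A"
proof (induction arbitrary: G' rule: wf_fm.induct)
  case (wf_All G T A)
  show ?case
  proof (rule wf_fm.wf_All)
    fix x assume "x \<notin> cvars G'"
    hence "x \<notin> cvars G" using wf_All.prems by (auto simp: cvars_iff)
    thus "wf_fm S (G' @ [CVar x T]) (openv 0 (FV x) A)" using wf_All.IH[of x "G' @ [CVar x T]"] wf_All.prems by auto
  qed
next
  case (wf_Ex G T A)
  show ?case
  proof (rule wf_fm.wf_Ex)
    fix x assume "x \<notin> cvars G'"
    hence "x \<notin> cvars G" using wf_Ex.prems by (auto simp: cvars_iff)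
    thus "wf_fm S (G' @ [CVar x T]) (openv 0 (FV x) A)" using wf_Ex.IH[of x "G' @ [CVar x T]"] wf_Ex.prems by auto
  qed
next
  case (wf_New G v A)
  show ?case
  proof (rule wf_fm.wf_New)
    fix x assume "x \<notin> cnames G'"
    hence "x \<notin> cnames G" using wf_New.prems by (auto simp: cnames_iff)
    thus "wf_fm S (G' @ [CName x v]) (openn 0 x A)" using wf_New.IH[of x "G' @ [CName x v]"] wf_New.prems by auto
  qed
qed (auto intro: wf_fm.intros has_ty_mono elim!: list.rel_mono_strong)

lemma fv_openv_t: "fv_t t \<subseteq> fv_t (openv_t k s t)" by (induction t) auto
lemma fn_openv_t: "fn_t t \<subseteq> fn_t (openv_t k s t)" by (induction t) auto
lemma fv_openv_tx: "fv_t (openv_t k (FV x) t) \<subseteq> fv_t t \<union> {x}" by (induction t) auto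
lemma fn_openv_tx: "fn_t (openv_t k (FV x) t) \<subseteq> fn_t t" by (induction t) auto
lemma fv_openn_t: "fv_t (openn_t k c t) = fv_t t" by (induction t) auto
lemma fn_openn_t: "fn_t (openn_t k c t) \<subseteq> fn_t t \<union> {c}" by (induction t) auto
lemma fn_openn_t2: "fn_t t \<subseteq> fn_t (openn_t k c t)" by (induction t) auto

lemma fv_openv: "fv_f A \<subseteq> fv_f (openv k s A)"
  by (induction A arbitrary: k) (auto, (blast dest: fv_openv_t[THEN subsetD])+)
lemma fn_openv: "fn_f A \<subseteq> fn_f (openv k s A)"
  by (induction A arbitrary: k) (auto, (blast dest: fn_openv_t[THEN subsetD])+)
lemma fv_openn: "fv_f (openn k c A) = fv_f A"
  by (induction A arbitrary: k) (auto simp: fv_openn_t)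
lemma fn_openn: "fn_f A \<subseteq> fn_f (openn k c A)"
  by (induction A arbitrary: k) (auto, (blast dest: fn_openn_t2[THEN subsetD])+)

lemma wf_fv: "wf_fm S G A \<Longrightarrow> fv_f A \<subseteq> cvars G \<and> fn_f A \<subseteq> cnames G"
proof (induction rule: wf_fm.induct)
  case (wf_All G T A)
  obtain x where x: "x \<notin> cvars G \<union> fv_f A" using ex_fresh[of "cvars G \<union> fv_f A"] by auto
  then show ?case using wf_All.IH[of x] fv_openv[of A 0 "FV x"] fn_openv[of A 0 "FV x"] by auto
next
  case (wf_Ex G T A)
  obtain x where x: "x \<notin> cvars G \<union> fv_f A" using ex_fresh[of "cvars G \<union> fv_f A"] by auto
  then show ?case using wf_Ex.IH[of x] fv_openv[of A 0 "FV x"] fn_openv[of A 0 "FV x"] by auto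
next
  case (wf_New G v A)
  obtain x where x: "x \<notin> cnames G \<union> fn_f A" using ex_fresh[of "cnames G \<union> fn_f A"] by auto
  then show ?case using wf_New.IH[of x] fv_openn[of 0 x A] fn_openn[of A 0 x] by auto
next
  case (wf_Rel G ts p)
  hence "\<forall>t\<in>set ts. \<exists>T. has_ty S G t T" by (auto dest: l2ex)
  then show ?case using has_ty_props by fastforce
qed (use has_ty_props in fastforce)+

lemma ty_lc: "has_ty S G t T \<Longrightarrow> openv_t k s t = t" "has_ty S G t T \<Longrightarrow> openn_t k c t = t"
  "has_ty S G t T \<Longrightarrow> fv_t t \<subseteq> cvars G" "has_ty S G t T \<Longrightarrow> fn_t t \<subseteq> cnames G"
  using has_ty_props by blast+

lemma fswap_openv: "has_ty S G a Ta \<Longrightarrow> has_ty S G b Tb \<Longrightarrow>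
  openv k s (fswap a b A) = fswap a b (openv k s A)"
  by (induction A arbitrary: k) (auto simp: ty_lc)
lemma fswap_openn: "has_ty S G a Ta \<Longrightarrow> has_ty S G b Tb \<Longrightarrow>
  openn k c (fswap a b A) = fswap a b (openn k c A)"
  by (induction A arbitrary: k) (auto simp: ty_lc)

lemma wf_fswap: "wf_fm S G A \<Longrightarrow> has_ty S G a (NTy v) \<Longrightarrow> has_ty S G b (NTy v) \<Longrightarrow>
  wf_fm S G (fswap a b A)"
proof (induction rule: wf_fm.induct)
  case (wf_All G T A)
  show ?case
  proof (simp, rule wf_fm.wf_All)
    fix x assume "x \<notin> cvars G"
    moreover have "has_ty S (G @ [CVar x T]) a (NTy v)" "has_ty S (G @ [CVar x T]) b (NTy v)"
      using wf_All.prems by (auto elim: has_ty_mono)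
    ultimately show "wf_fm S (G @ [CVar x T]) (openv 0 (FV x) (fswap a b A))"
      using wf_All.IH fswap_openv by metis
  qed
next
  case (wf_Ex G T A)
  show ?case
  proof (simp, rule wf_fm.wf_Ex)
    fix x assume "x \<notin> cvars G"
    moreover have "has_ty S (G @ [CVar x T]) a (NTy v)" "has_ty S (G @ [CVar x T]) b (NTy v)"
      using wf_Ex.prems by (auto elim: has_ty_mono)
    ultimately show "wf_fm S (G @ [CVar x T]) (openv 0 (FV x) (fswap a b A))"
      using wf_Ex.IH fswap_openv by metis
  qed
next
  case (wf_New G w A)
  show ?case
  proof (simp, rule wf_fm.wf_New)
    fix x assume "x \<notin> cnames G"
    moreover have "has_ty S (G @ [CName x w]) a (NTy v)" "has_ty S (G @ [CName x w]) b (NTy v)"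
      using wf_New.prems by (auto elim: has_ty_mono)
    ultimately show "wf_fm S (G @ [CName x w]) (openn 0 x (fswap a b A))"
      using wf_New.IH fswap_openn by metis
  qed
next
  case (wf_Rel G ts p)
  then show ?case by (auto intro!: wf_fm.wf_Rel has_ty.typ_Swp simp: list.rel_map elim!: list.rel_mono_strong)
qed (auto intro!: wf_fm.intros has_ty.typ_Swp)

lemma fv_fswap: "fv_f A \<subseteq> fv_f (fswap a b A)" and fn_fswap: "fn_f A \<subseteq> fn_f (fswap a b A)"
  by (induction A) auto

lemma atom_fswap[simp]: "is_atom (fswap a b P) = is_atom P" by (cases P) auto

lemma fswap_inj: "fswap a b A = fswap a b B \<Longrightarrow> A = B"
proof (induction A arbitrary: B)
  case (Rel p ts) then show ?case
    by (cases B) (auto simp: inj_def intro: inj_map_eq_map[THEN iffD1])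
qed (case_tac B; auto)+


section \<open>Substitution and renaming\<close>

fun subst_f :: "nat \<Rightarrow> trm \<Rightarrow> fm \<Rightarrow> fm" where
  "subst_f x s Top = Top" | "subst_f x s Bot = Bot"
| "subst_f x s (Eq t u) = Eq (subst_t x s t) (subst_t x s u)"
| "subst_f x s (Fr t u) = Fr (subst_t x s t) (subst_t x s u)"
| "subst_f x s (Rel p ts) = Rel p (map (subst_t x s) ts)"
| "subst_f x s (And A B) = And (subst_f x s A) (subst_f x s B)"
| "subst_f x s (Or A B) = Or (subst_f x s A) (subst_f x s B)"
| "subst_f x s (Imp A B) = Imp (subst_f x s A) (subst_f x s B)"
| "subst_f x s (All T A) = All T (subst_f x s A)"
| "subst_f x s (Ex T A) = Ex T (subst_f x s A)"
| "subst_f x s (New v A) = New v (subst_f x s A)"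

lemma st_openv: "x \<notin> fv_t t \<Longrightarrow> subst_t x s (openv_t k (FV x) t) = openv_t k s t"
  by (induction t) auto
lemma sf_openv: "x \<notin> fv_f A \<Longrightarrow> subst_f x s (openv k (FV x) A) = openv k s A"
  by (induction A arbitrary: k) (auto simp: st_openv)
lemma st_commute: "y \<noteq> x \<Longrightarrow> (\<forall>j r. openv_t j r s = s) \<Longrightarrow>
   subst_t x s (openv_t k (FV y) t) = openv_t k (FV y) (subst_t x s t)"
  by (induction t) auto
lemma sf_commute: "y \<noteq> x \<Longrightarrow> (\<forall>j r. openv_t j r s = s) \<Longrightarrow>
   subst_f x s (openv k (FV y) A) = openv k (FV y) (subst_f x s A)"
  by (induction A arbitrary: k) (auto simp: st_commute)
lemma stn_commute: "(\<forall>j c. openn_t j c s = s) \<Longrightarrow>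
   subst_t x s (openn_t k c t) = openn_t k c (subst_t x s t)"
  by (induction t) auto
lemma sfn_commute: "(\<forall>j c. openn_t j c s = s) \<Longrightarrow>
   subst_f x s (openn k c A) = openn k c (subst_f x s A)"
  by (induction A arbitrary: k) (auto simp: stn_commute)
lemma fv_subst_t: "fv_t (subst_t x s t) \<subseteq> (fv_t t - {x}) \<union> fv_t s"
  by (induction t) auto
lemma fv_subst_f: "fv_f (subst_f x s A) \<subseteq> (fv_f A - {x}) \<union> fv_t s"
  by (induction A) (auto, (blast dest: fv_subst_t[THEN subsetD])+)
lemma subst_nofv: "x \<notin> fv_t t \<Longrightarrow> subst_t x s t = t"
  by (induction t) (auto intro: map_idI)

lemma has_ty_subst: "has_ty S G' u U \<Longrightarrow> (\<forall>e\<in>set G'. e \<in> set G \<or> e = CVar x T) \<Longrightarrow>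
  x \<notin> cvars G \<Longrightarrow> has_ty S G t T \<Longrightarrow> has_ty S G (subst_t x t u) U"
proof (induction rule: has_ty.induct)
  case (typ_FV y U G')
  then show ?case by (auto intro: has_ty.intros simp: cvars_iff)
next
  case (typ_NS a v G')
  then show ?case by (auto intro: has_ty.intros)
next
  case (typ_Fn f Ts T G ts)
  then show ?case by (auto intro!: has_ty.intros simp: list.rel_map elim!: list.rel_mono_strong)
qed (auto intro: has_ty.intros)

fun vsw :: "nat \<Rightarrow> nat \<Rightarrow> nat \<Rightarrow> nat" where
  "vsw x y z = (if z = x then y else if z = y then x else z)"

fun rt :: "nat \<Rightarrow> nat \<Rightarrow> trm \<Rightarrow> trm" where
  "rt x y (BV i) = BV i" | "rt x y (FV z) = FV (vsw x y z)" | "rt x y (BN i) = BN i"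
| "rt x y (NS a) = NS a" | "rt x y (Cst c) = Cst c" | "rt x y (Fn f ts) = Fn f (map (rt x y) ts)"
| "rt x y (Swp a b t) = Swp (rt x y a) (rt x y b) (rt x y t)"
| "rt x y (Abst a t) = Abst (rt x y a) (rt x y t)"

fun rf :: "nat \<Rightarrow> nat \<Rightarrow> fm \<Rightarrow> fm" where
  "rf x y Top = Top" | "rf x y Bot = Bot"
| "rf x y (Eq t u) = Eq (rt x y t) (rt x y u)"
| "rf x y (Fr t u) = Fr (rt x y t) (rt x y u)"
| "rf x y (Rel p ts) = Rel p (map (rt x y) ts)"
| "rf x y (And A B) = And (rf x y A) (rf x y B)"
| "rf x y (Or A B) = Or (rf x y A) (rf x y B)"
| "rf x y (Imp A B) = Imp (rf x y A) (rf x y B)"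
| "rf x y (All T A) = All T (rf x y A)"
| "rf x y (Ex T A) = Ex T (rf x y A)"
| "rf x y (New v A) = New v (rf x y A)"

fun rc :: "nat \<Rightarrow> nat \<Rightarrow> centry \<Rightarrow> centry" where
  "rc x y (CVar z T) = CVar (vsw x y z) T" | "rc x y (CName a v) = CName a v"

lemma has_ty_ren: "has_ty S G t T \<Longrightarrow> has_ty S (map (rc x y) G) (rt x y t) T"
proof (induction rule: has_ty.induct)
  case (typ_FV z T G)
  then show ?case using has_ty.typ_FV[of z T G] by (force intro: has_ty.typ_FV)
next
  case (typ_NS a v G)
  then show ?case by (force intro: has_ty.typ_NS)
next
  case (typ_Fn f Ts T G ts)
  then show ?case by (auto intro!: has_ty.intros simp: list.rel_map elim!: list.rel_mono_strong)
qed (auto intro: has_ty.intros)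

lemma rt_openv: "rt x y (openv_t k s t) = openv_t k (rt x y s) (rt x y t)"
  by (induction t) auto
lemma rf_openv: "rf x y (openv k s A) = openv k (rt x y s) (rf x y A)"
  by (induction A arbitrary: k) (auto simp: rt_openv)
lemma rt_openn: "rt x y (openn_t k c t) = openn_t k c (rt x y t)"
  by (induction t) auto
lemma rf_openn: "rf x y (openn k c A) = openn k c (rf x y A)"
  by (induction A arbitrary: k) (auto simp: rt_openn)
lemma vsw_vsw[simp]: "vsw x y (vsw x y z) = z" by auto
lemma vsw_eq: "vsw x y w = z \<longleftrightarrow> w = vsw x y z" by auto
lemma cvars_rc: "z \<in> cvars (map (rc x y) G) \<longleftrightarrow> vsw x y z \<in> cvars G"
proof -
  have "CVar z T \<in> rc x y ` set G \<longleftrightarrow> CVar (vsw x y z) T \<in> set G" for T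
  proof
    assume "CVar z T \<in> rc x y ` set G"
    then obtain e where "e \<in> set G" "rc x y e = CVar z T" by auto
    moreover have "e = CVar (vsw x y z) T" using \<open>rc x y e = CVar z T\<close>
      by (cases e) (auto simp del: vsw.simps simp: vsw_eq)
    ultimately show "CVar (vsw x y z) T \<in> set G" by simp
  next
    assume "CVar (vsw x y z) T \<in> set G"
    hence "rc x y (CVar (vsw x y z) T) \<in> rc x y ` set G" by blast
    thus "CVar z T \<in> rc x y ` set G" by (simp del: vsw.simps)
  qed
  thus ?thesis by (simp add: cvars_iff)
qed
lemma cnames_rc: "cnames (map (rc x y) G) = cnames G"
proof -
  have "CName a v \<in> rc x y ` set G \<longleftrightarrow> CName a v \<in> set G" for a v
    by (auto simp: image_iff, metis rc.elims centry.distinct(1) centry.inject(2), force)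
  thus ?thesis by (auto simp: cnames_iff)
qed

lemma wf_ren: "wf_fm S G A \<Longrightarrow> wf_fm S (map (rc x y) G) (rf x y A)"
proof (induction rule: wf_fm.induct)
  case (wf_All G T A)
  show ?case
  proof (simp del: vsw.simps, rule wf_fm.wf_All)
    fix z assume "z \<notin> cvars (map (rc x y) G)"
    hence "vsw x y z \<notin> cvars G" by (simp add: cvars_rc)
    from wf_All.IH[OF this] show "wf_fm S (map (rc x y) G @ [CVar z T]) (openv 0 (FV z) (rf x y A))"
      by (simp add: rf_openv del: vsw.simps)
  qed
next
  case (wf_Ex G T A)
  show ?case
  proof (simp del: vsw.simps, rule wf_fm.wf_Ex)
    fix z assume "z \<notin> cvars (map (rc x y) G)"
    hence "vsw x y z \<notin> cvars G" by (simp add: cvars_rc)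
    from wf_Ex.IH[OF this] show "wf_fm S (map (rc x y) G @ [CVar z T]) (openv 0 (FV z) (rf x y A))"
      by (simp add: rf_openv del: vsw.simps)
  qed
next
  case (wf_New G v A)
  show ?case
  proof (simp del: vsw.simps, rule wf_fm.wf_New)
    fix z assume "z \<notin> cnames (map (rc x y) G)"
    hence "z \<notin> cnames G" by (simp add: cnames_rc)
    from wf_New.IH[OF this] show "wf_fm S (map (rc x y) G @ [CName z v]) (openn 0 z (rf x y A))"
      by (simp add: rf_openn del: vsw.simps)
  qed
next
  case (wf_Rel G ts p)
  then show ?case by (auto intro!: wf_fm.wf_Rel simp: list.rel_map elim!: list.rel_mono_strong dest: has_ty_ren)
qed (auto intro!: wf_fm.intros dest: has_ty_ren)

lemma rc_id: "x \<notin> cvars G \<Longrightarrow> y \<notin> cvars G \<Longrightarrow> map (rc x y) G = G"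
proof (induction G)
  case (Cons e G) then show ?case by (cases e) (auto simp: cvars_def)
qed simp
lemma rt_id: "x \<notin> fv_t t \<Longrightarrow> y \<notin> fv_t t \<Longrightarrow> rt x y t = t"
  by (induction t) (auto intro: map_idI)
lemma rf_id: "x \<notin> fv_f A \<Longrightarrow> y \<notin> fv_f A \<Longrightarrow> rf x y A = A"
  by (induction A) (auto intro: map_idI simp: rt_id)


lemma wf_subst: "wf_fm S G' B \<Longrightarrow> (\<forall>e\<in>set G'. e \<in> set G \<or> e = CVar x0 T0) \<Longrightarrow>
  x0 \<notin> cvars G \<Longrightarrow> has_ty S G t0 T0 \<Longrightarrow> wf_fm S G (subst_f x0 t0 B)"
proof (induction arbitrary: G rule: wf_fm.induct)
  case (wf_All G' U C)
  have wfC: "wf_fm S G' (All U C)" by (rule wf_fm.wf_All) (use wf_All.hyps in blast)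
  have cv: "cvars G' \<subseteq> cvars G \<union> {x0}" using wf_All.prems(1) by (force simp: cvars_iff)
  have lc: "\<forall>j r. openv_t j r t0 = t0" "\<forall>j c. openn_t j c t0 = t0" using wf_All.prems(3) ty_lc by auto
  show ?case
  proof (simp, rule wf_fm.wf_All)
    fix y assume y: "y \<notin> cvars G"
    obtain z where z: "z \<notin> cvars G \<union> cvars G' \<union> {x0, y}"
      using ex_fresh[of "cvars G \<union> cvars G' \<union> {x0, y}"] by auto
    have "wf_fm S (G @ [CVar z U]) (subst_f x0 t0 (openv 0 (FV z) C))"
      using wf_All.IH[of z "G @ [CVar z U]"] z wf_All.prems has_ty_mono[of S G t0 T0 "G @ [CVar z U]"] by auto
    hence "wf_fm S (G @ [CVar z U]) (openv 0 (FV z) (subst_f x0 t0 C))"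
      using sf_commute[of z x0 t0 0 C] z lc by auto
    from wf_ren[OF this, of z y]
    have "wf_fm S (G @ [CVar y U]) (openv 0 (FV y) (rf z y (subst_f x0 t0 C)))"
      using rc_id[of z G y] z y by (simp add: rf_openv)
    moreover have "fv_f (subst_f x0 t0 C) \<subseteq> cvars G"
      using fv_subst_f[of x0 t0 C] wf_fv[OF wfC] cv ty_lc(3)[OF wf_All.prems(3)] by auto
    ultimately show "wf_fm S (G @ [CVar y U]) (openv 0 (FV y) (subst_f x0 t0 C))"
      using rf_id[of z "subst_f x0 t0 C" y] z y by (metis (no_types, lifting) UnCI insertCI subsetD)
  qed
next
  case (wf_Ex G' U C)
  have wfC: "wf_fm S G' (Ex U C)" by (rule wf_fm.wf_Ex) (use wf_Ex.hyps in blast)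
  have cv: "cvars G' \<subseteq> cvars G \<union> {x0}" using wf_Ex.prems(1) by (force simp: cvars_iff)
  have lc: "\<forall>j r. openv_t j r t0 = t0" "\<forall>j c. openn_t j c t0 = t0" using wf_Ex.prems(3) ty_lc by auto
  show ?case
  proof (simp, rule wf_fm.wf_Ex)
    fix y assume y: "y \<notin> cvars G"
    obtain z where z: "z \<notin> cvars G \<union> cvars G' \<union> {x0, y}"
      using ex_fresh[of "cvars G \<union> cvars G' \<union> {x0, y}"] by auto
    have "wf_fm S (G @ [CVar z U]) (subst_f x0 t0 (openv 0 (FV z) C))"
      using wf_Ex.IH[of z "G @ [CVar z U]"] z wf_Ex.prems has_ty_mono[of S G t0 T0 "G @ [CVar z U]"] by auto
    hence "wf_fm S (G @ [CVar z U]) (openv 0 (FV z) (subst_f x0 t0 C))"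
      using sf_commute[of z x0 t0 0 C] z lc by auto
    from wf_ren[OF this, of z y]
    have "wf_fm S (G @ [CVar y U]) (openv 0 (FV y) (rf z y (subst_f x0 t0 C)))"
      using rc_id[of z G y] z y by (simp add: rf_openv)
    moreover have "fv_f (subst_f x0 t0 C) \<subseteq> cvars G"
      using fv_subst_f[of x0 t0 C] wf_fv[OF wfC] cv ty_lc(3)[OF wf_Ex.prems(3)] by auto
    ultimately show "wf_fm S (G @ [CVar y U]) (openv 0 (FV y) (subst_f x0 t0 C))"
      using rf_id[of z "subst_f x0 t0 C" y] z y by (metis (no_types, lifting) UnCI insertCI subsetD)
  qed
next
  case (wf_New G' w C)
  have lc: "\<forall>j c. openn_t j c t0 = t0" using wf_New.prems(3) ty_lc by auto
  show ?case
  proof (simp, rule wf_fm.wf_New)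
    fix c assume c: "c \<notin> cnames G"
    hence "c \<notin> cnames G'" using wf_New.prems(1) by (force simp: cnames_iff)
    hence "wf_fm S (G @ [CName c w]) (subst_f x0 t0 (openn 0 c C))"
      using wf_New.IH[of c "G @ [CName c w]"] wf_New.prems has_ty_mono[of S G t0 T0 "G @ [CName c w]"] by auto
    thus "wf_fm S (G @ [CName c w]) (openn 0 c (subst_f x0 t0 C))" using sfn_commute lc by metis
  qed
next
  case (wf_Rel G' ts p)
  then show ?case by (auto intro!: wf_fm.wf_Rel simp: list.rel_map elim!: list.rel_mono_strong, metis has_ty_subst)
qed (auto intro!: wf_fm.intros dest: has_ty_subst)

lemma wf_inst_All: "wf_fm S G (All T A) \<Longrightarrow> has_ty S G t T \<Longrightarrow> wf_fm S G (openv 0 t A)"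
proof -
  assume a: "wf_fm S G (All T A)" "has_ty S G t T"
  obtain x where x: "x \<notin> cvars G \<union> fv_f A" using ex_fresh[of "cvars G \<union> fv_f A"] by auto
  from a(1) have "wf_fm S (G @ [CVar x T]) (openv 0 (FV x) A)" using x by (cases rule: wf_fm.cases) auto
  from wf_subst[OF this, of G x T t] have "wf_fm S G (subst_f x t (openv 0 (FV x) A))" using x a(2) by auto
  thus ?thesis using sf_openv x by auto
qed
lemma wf_inst_Ex: "wf_fm S G (Ex T A) \<Longrightarrow> has_ty S G t T \<Longrightarrow> wf_fm S G (openv 0 t A)"
proof -
  assume a: "wf_fm S G (Ex T A)" "has_ty S G t T"
  obtain x where x: "x \<notin> cvars G \<union> fv_f A" using ex_fresh[of "cvars G \<union> fv_f A"] by auto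
  from a(1) have "wf_fm S (G @ [CVar x T]) (openv 0 (FV x) A)" using x by (cases rule: wf_fm.cases) auto
  from wf_subst[OF this, of G x T t] have "wf_fm S G (subst_f x t (openv 0 (FV x) A))" using x a(2) by auto
  thus ?thesis using sf_openv x by auto
qed


section \<open>Double swap\<close>

lemma Init': "P \<in># Gam \<Longrightarrow> P \<in># Del \<Longrightarrow> is_atom P \<Longrightarrow> der S G Gam Del n"
  by (metis der.Init multi_member_split add_mset_add_single)

lemma dstep: "is_atom P \<Longrightarrow> has_ty S G t T \<Longrightarrow> has_ty S G sa (NTy v) \<Longrightarrow> has_ty S G sb (NTy v) \<Longrightarrow>
  der S G (Gam + {#Eq (Swp sa sb (Swp sa sb t)) t, subst_at x (Swp sa sb (Swp sa sb t)) P, subst_at x t P#}) Del n \<Longrightarrow>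
  der S G (Gam + {#subst_at x (Swp sa sb (Swp sa sb t)) P#}) Del n"
proof -
  assume a: "is_atom P" "has_ty S G t T" "has_ty S G sa (NTy v)" "has_ty S G sb (NTy v)"
    and d: "der S G (Gam + {#Eq (Swp sa sb (Swp sa sb t)) t, subst_at x (Swp sa sb (Swp sa sb t)) P, subst_at x t P#}) Del n"
  have "der S G (Gam + {#Eq (Swp sa sb (Swp sa sb t)) t, subst_at x (Swp sa sb (Swp sa sb t)) P#}) Del n"
    by (rule der.EqS[OF a(1)]) (use d in \<open>simp add: add_mset_commute\<close>)
  hence "der S G (Gam + {#subst_at x (Swp sa sb (Swp sa sb t)) P#} + {#Eq (Swp sa sb (Swp sa sb t)) t#}) Del n"
    by (simp add: add_mset_commute)
  thus ?thesis by (rule der.S2[OF a(3) a(4) a(2)])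
qed

lemma fresh_list: "\<exists>z. z \<notin> (\<Union>t\<in>set ts. fv_t t) \<union> X" if "finite X" for ts :: "trm list"
  using ex_fresh[of "(\<Union>t\<in>set ts. fv_t t) \<union> X"] that by auto

lemma ds_rel: "(\<forall>t\<in>set ys. \<exists>T. has_ty S G t T) \<Longrightarrow> has_ty S G sa (NTy v) \<Longrightarrow> has_ty S G sb (NTy v) \<Longrightarrow>
   der S G (Gam + {#Rel p (zs @ map (\<lambda>t. Swp sa sb (Swp sa sb t)) ys)#}) (Del + {#Rel p (zs @ ys)#}) n"
proof (induction ys arbitrary: zs Gam)
  case Nil
  then show ?case by (auto intro: Init')
next
  case (Cons y ys)
  obtain T where T: "has_ty S G y T" using Cons.prems by auto
  obtain z where z: "z \<notin> (\<Union>t\<in>set (zs @ y # ys). fv_t t) \<union> fv_t sa \<union> fv_t sb"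
    using ex_fresh[of "(\<Union>t\<in>set (zs @ y # ys). fv_t t) \<union> fv_t sa \<union> fv_t sb"] by auto
  let ?ss = "\<lambda>t. Swp sa sb (Swp sa sb t)"
  let ?P = "Rel p (zs @ FV z # map ?ss ys)"
  have e1: "subst_at z (?ss y) ?P = Rel p (zs @ map ?ss (y # ys))"
    and e2: "subst_at z y ?P = Rel p ((zs @ [y]) @ map ?ss ys)"
    using z by (auto simp: subst_nofv intro!: map_idI)
  have "der S G (Gam + {#Eq (?ss y) y, subst_at z (?ss y) ?P#} + {#Rel p ((zs @ [y]) @ map ?ss ys)#})
       (Del + {#Rel p ((zs @ [y]) @ ys)#}) n"
    by (rule Cons.IH) (use Cons.prems in auto)
  hence "der S G (Gam + {#Eq (?ss y) y, subst_at z (?ss y) ?P, subst_at z y ?P#}) (Del + {#Rel p (zs @ y # ys)#}) n"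
    unfolding e1 e2 by (simp add: add_mset_commute)
  from dstep[OF _ T Cons.prems(2,3) this] have "der S G (Gam + {#subst_at z (?ss y) ?P#}) (Del + {#Rel p (zs @ y # ys)#}) n"
    by simp
  thus ?case unfolding e1 by simp
qed

lemma ds_atom: "is_atom P \<Longrightarrow> wf_fm S G P \<Longrightarrow> has_ty S G sa (NTy v) \<Longrightarrow> has_ty S G sb (NTy v) \<Longrightarrow>
  der S G (Gam + {#fswap sa sb (fswap sa sb P)#}) (Del + {#P#}) n"
proof (cases P)
  case (Eq t u)
  assume a: "wf_fm S G P" "has_ty S G sa (NTy v)" "has_ty S G sb (NTy v)"
  obtain T where T: "has_ty S G t T" "has_ty S G u T" using a(1) Eq by (auto elim: wf_fm.cases)
  let ?ss = "\<lambda>t. Swp sa sb (Swp sa sb t)"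
  obtain z where z: "z \<notin> fv_t t \<union> fv_t u \<union> fv_t sa \<union> fv_t sb"
    using ex_fresh[of "fv_t t \<union> fv_t u \<union> fv_t sa \<union> fv_t sb"] by auto
  hence z': "z \<notin> fv_t t" "z \<notin> fv_t u" "z \<notin> fv_t sa" "z \<notin> fv_t sb" by auto
  let ?P1 = "Eq (FV z) (?ss u)" and ?P2 = "Eq t (FV z)"
  have e: "subst_at z (?ss t) ?P1 = Eq (?ss t) (?ss u)" "subst_at z t ?P1 = Eq t (?ss u)"
    "subst_at z (?ss u) ?P2 = Eq t (?ss u)" "subst_at z u ?P2 = Eq t u"
    using z by (auto simp: subst_nofv)
  have "der S G ((Gam + {#Eq (?ss t) t, Eq (?ss t) (?ss u)#}) + {#Eq (?ss u) u, subst_at z (?ss u) ?P2, subst_at z u ?P2#}) (Del + {#Eq t u#}) n"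
    unfolding e by (auto intro: Init')
  from dstep[OF _ T(2) a(2,3) this] have "der S G (Gam + {#Eq (?ss t) t, subst_at z (?ss t) ?P1, subst_at z t ?P1#}) (Del + {#Eq t u#}) n"
    unfolding e by (simp add: add_mset_commute)
  from dstep[OF _ T(1) a(2,3) this] show ?thesis using Eq unfolding e by simp
next
  case (Fr t u)
  assume a: "wf_fm S G P" "has_ty S G sa (NTy v)" "has_ty S G sb (NTy v)"
  obtain T T' where T: "has_ty S G t T" "has_ty S G u T'" using a(1) Fr by (auto elim: wf_fm.cases)
  let ?ss = "\<lambda>t. Swp sa sb (Swp sa sb t)"
  obtain z where z: "z \<notin> fv_t t \<union> fv_t u \<union> fv_t sa \<union> fv_t sb"
    using ex_fresh[of "fv_t t \<union> fv_t u \<union> fv_t sa \<union> fv_t sb"] by auto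
  hence z': "z \<notin> fv_t t" "z \<notin> fv_t u" "z \<notin> fv_t sa" "z \<notin> fv_t sb" by auto
  let ?P1 = "Fr (FV z) (?ss u)" and ?P2 = "Fr t (FV z)"
  have e: "subst_at z (?ss t) ?P1 = Fr (?ss t) (?ss u)" "subst_at z t ?P1 = Fr t (?ss u)"
    "subst_at z (?ss u) ?P2 = Fr t (?ss u)" "subst_at z u ?P2 = Fr t u"
    using z by (auto simp: subst_nofv)
  have "der S G ((Gam + {#Eq (?ss t) t, Fr (?ss t) (?ss u)#}) + {#Eq (?ss u) u, subst_at z (?ss u) ?P2, subst_at z u ?P2#}) (Del + {#Fr t u#}) n"
    unfolding e by (auto intro: Init')
  from dstep[OF _ T(2) a(2,3) this] have "der S G (Gam + {#Eq (?ss t) t, subst_at z (?ss t) ?P1, subst_at z t ?P1#}) (Del + {#Fr t u#}) n"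
    unfolding e by (simp add: add_mset_commute)
  from dstep[OF _ T(1) a(2,3) this] show ?thesis using Fr unfolding e by simp
next
  case (Rel p ts)
  assume a: "wf_fm S G P" "has_ty S G sa (NTy v)" "has_ty S G sb (NTy v)"
  have "\<forall>t\<in>set ts. \<exists>T. has_ty S G t T" using a(1) Rel by (auto elim!: wf_fm.cases dest: l2ex)
  from ds_rel[OF this a(2,3), of Gam p "[]" Del n] show ?thesis using Rel by (simp add: comp_def)
qed auto

lemma ds: "is_atom P \<Longrightarrow> wf_fm S G P \<Longrightarrow> has_ty S G sa (NTy v) \<Longrightarrow> has_ty S G sb (NTy v) \<Longrightarrow>
  der S G (Gam + {#fswap sa sb P#}) (Del + {#P#}) n"
  apply (rule der.E3[of "fswap sa sb P" S G sa v sb])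
  using ds_atom[of P S G sa v sb "Gam + {#fswap sa sb P#}" Del n] wf_fswap[of S G P sa v sb]
  by (auto simp: add_mset_commute)


section \<open>Relation between swapped and unswapped sequents\<close>

definition Rf :: "sig \<Rightarrow> trm \<Rightarrow> trm \<Rightarrow> ctx \<Rightarrow> fm \<Rightarrow> fm \<Rightarrow> bool" where
  "Rf S sa sb G A A' \<longleftrightarrow> A' = A \<or> (A = fswap sa sb A' \<and> wf_fm S G A')"

definition okw :: "ctx \<Rightarrow> fm multiset \<Rightarrow> bool" where
  "okw G W \<longleftrightarrow> (\<forall>A\<in>#W. fv_f A \<subseteq> cvars G \<and> fn_f A \<subseteq> cnames G)"

definition ext :: "fm \<Rightarrow> fm \<Rightarrow> fm multiset" where
  "ext X X' = (if X' = X then {#} else {#X'#})"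

lemma Rf_refl[simp]: "Rf S sa sb G A A" by (simp add: Rf_def)

lemma Rf_mono: "Rf S sa sb G A A' \<Longrightarrow> set G \<subseteq> set G' \<Longrightarrow> Rf S sa sb G' A A'"
  by (auto simp: Rf_def intro: wf_mono)

lemma rel_mono: "rel_mset (Rf S sa sb G) M N \<Longrightarrow> set G \<subseteq> set G' \<Longrightarrow> rel_mset (Rf S sa sb G') M N"
  by (erule multiset.rel_mono_strong) (rule Rf_mono)

lemma rel_refl: "rel_mset (Rf S sa sb G) M M"
  by (rule multiset.rel_refl) simp

lemma Rf_fv: "Rf S sa sb G A A' \<Longrightarrow> fv_f A' \<subseteq> fv_f A \<and> fn_f A' \<subseteq> fn_f A"
  unfolding Rf_def using fv_fswap[of A' sa sb] fn_fswap[of A' sa sb] by auto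

lemma fv_ms_simps[simp]: "fv_ms (M + N) = fv_ms M \<union> fv_ms N" "fv_ms (add_mset A M) = fv_f A \<union> fv_ms M"
  "fn_ms (M + N) = fn_ms M \<union> fn_ms N" "fn_ms (add_mset A M) = fn_f A \<union> fn_ms M"
  by (auto simp: fv_ms_def fn_ms_def)

lemma rel_fv0: "rel_mset Q M N \<Longrightarrow> (\<forall>a b. Q a b \<longrightarrow> fv_f b \<subseteq> fv_f a \<and> fn_f b \<subseteq> fn_f a) \<Longrightarrow>
   fv_ms N \<subseteq> fv_ms M \<and> fn_ms N \<subseteq> fn_ms M"
  by (induction rule: rel_mset_induct) (auto simp: fv_ms_def[of "{#}"] fn_ms_def[of "{#}"])

lemma rel_fv: "rel_mset (Rf S sa sb G) M N \<Longrightarrow> fv_ms N \<subseteq> fv_ms M \<and> fn_ms N \<subseteq> fn_ms M"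
  using rel_fv0 Rf_fv by blast


lemma okw_mono: "okw G W \<Longrightarrow> set G \<subseteq> set G' \<Longrightarrow> okw G' W"
proof -
  assume "okw G W" "set G \<subseteq> set G'"
  moreover have "cvars G \<subseteq> cvars G'" "cnames G \<subseteq> cnames G'" using \<open>set G \<subseteq> set G'\<close>
    by (fastforce simp: cvars_iff cnames_iff)+
  ultimately show ?thesis unfolding okw_def by blast
qed

lemma okw_fv: "okw G W \<Longrightarrow> fv_ms W \<subseteq> cvars G \<and> fn_ms W \<subseteq> cnames G"
  by (auto simp: okw_def fv_ms_def fn_ms_def)

lemma okw_ext: "okw G W \<Longrightarrow> Rf S sa sb G X X' \<Longrightarrow> okw G (W + ext X X')"
  by (auto simp: okw_def ext_def Rf_def dest: wf_fv)

lemma Rf_Top: "Rf S sa sb G Top X' \<Longrightarrow> X' = Top" by (cases X') (auto simp: Rf_def)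
lemma Rf_Bot: "Rf S sa sb G Bot X' \<Longrightarrow> X' = Bot" by (cases X') (auto simp: Rf_def)

lemma Rf_And: "Rf S sa sb G (And A B) X' \<Longrightarrow> \<exists>A' B'. X' = And A' B' \<and> Rf S sa sb G A A' \<and> Rf S sa sb G B B'"
  by (cases X') (auto simp: Rf_def elim: wf_fm.cases)
lemma Rf_Or: "Rf S sa sb G (Or A B) X' \<Longrightarrow> \<exists>A' B'. X' = Or A' B' \<and> Rf S sa sb G A A' \<and> Rf S sa sb G B B'"
  by (cases X') (auto simp: Rf_def elim: wf_fm.cases)
lemma Rf_Imp: "Rf S sa sb G (Imp A B) X' \<Longrightarrow> \<exists>A' B'. X' = Imp A' B' \<and> Rf S sa sb G A A' \<and> Rf S sa sb G B B'"
  by (cases X') (auto simp: Rf_def elim: wf_fm.cases)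

lemma Rf_All: "Rf S sa sb G (All T A) X' \<Longrightarrow> has_ty S G sa Ta \<Longrightarrow> has_ty S G sb Tb \<Longrightarrow>
  \<exists>A'. X' = All T A' \<and> (\<forall>G2 t. set G \<subseteq> set G2 \<longrightarrow> has_ty S G2 t T \<longrightarrow> Rf S sa sb G2 (openv 0 t A) (openv 0 t A'))"
proof (cases "X' = All T A")
  case False
  assume "Rf S sa sb G (All T A) X'" "has_ty S G sa Ta" "has_ty S G sb Tb"
  then obtain A' where X: "X' = All T A'" "A = fswap sa sb A'" "wf_fm S G (All T A')"
    using False by (cases X') (auto simp: Rf_def)
  show ?thesis
  proof (intro exI conjI allI impI)
    fix G2 t assume G2: "set G \<subseteq> set G2" "has_ty S G2 t T"
    have "openv 0 t A = fswap sa sb (openv 0 t A')"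
      using X(2) fswap_openv has_ty_mono[OF \<open>has_ty S G sa Ta\<close> G2(1)] has_ty_mono[OF \<open>has_ty S G sb Tb\<close> G2(1)] by metis
    moreover have "wf_fm S G2 (openv 0 t A')" using wf_inst_All[OF wf_mono[OF X(3) G2(1)] G2(2)] .
    ultimately show "Rf S sa sb G2 (openv 0 t A) (openv 0 t A')" by (simp add: Rf_def)
  qed (rule X(1))
qed auto

lemma Rf_Ex: "Rf S sa sb G (Ex T A) X' \<Longrightarrow> has_ty S G sa Ta \<Longrightarrow> has_ty S G sb Tb \<Longrightarrow>
  \<exists>A'. X' = Ex T A' \<and> (\<forall>G2 t. set G \<subseteq> set G2 \<longrightarrow> has_ty S G2 t T \<longrightarrow> Rf S sa sb G2 (openv 0 t A) (openv 0 t A'))"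
proof (cases "X' = Ex T A")
  case False
  assume "Rf S sa sb G (Ex T A) X'" "has_ty S G sa Ta" "has_ty S G sb Tb"
  then obtain A' where X: "X' = Ex T A'" "A = fswap sa sb A'" "wf_fm S G (Ex T A')"
    using False by (cases X') (auto simp: Rf_def)
  show ?thesis
  proof (intro exI conjI allI impI)
    fix G2 t assume G2: "set G \<subseteq> set G2" "has_ty S G2 t T"
    have "openv 0 t A = fswap sa sb (openv 0 t A')"
      using X(2) fswap_openv has_ty_mono[OF \<open>has_ty S G sa Ta\<close> G2(1)] has_ty_mono[OF \<open>has_ty S G sb Tb\<close> G2(1)] by metis
    moreover have "wf_fm S G2 (openv 0 t A')" using wf_inst_Ex[OF wf_mono[OF X(3) G2(1)] G2(2)] .
    ultimately show "Rf S sa sb G2 (openv 0 t A) (openv 0 t A')" by (simp add: Rf_def)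
  qed (rule X(1))
qed auto

lemma Rf_New: "Rf S sa sb G (New w A) X' \<Longrightarrow> has_ty S G sa Ta \<Longrightarrow> has_ty S G sb Tb \<Longrightarrow>
  \<exists>A'. X' = New w A' \<and> (\<forall>c. c \<notin> cnames G \<longrightarrow> Rf S sa sb (G @ [CName c w]) (openn 0 c A) (openn 0 c A'))"
proof (cases "X' = New w A")
  case False
  assume "Rf S sa sb G (New w A) X'" "has_ty S G sa Ta" "has_ty S G sb Tb"
  then obtain A' where X: "X' = New w A'" "A = fswap sa sb A'" "wf_fm S G (New w A')"
    using False by (cases X') (auto simp: Rf_def)
  show ?thesis
  proof (intro exI conjI allI impI)
    fix c assume c: "c \<notin> cnames G"
    have "openn 0 c A = fswap sa sb (openn 0 c A')"
      using X(2) fswap_openn \<open>has_ty S G sa Ta\<close> \<open>has_ty S G sb Tb\<close> by metis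
    moreover have "wf_fm S (G @ [CName c w]) (openn 0 c A')" using X(3) c by (cases rule: wf_fm.cases) auto
    ultimately show "Rf S sa sb (G @ [CName c w]) (openn 0 c A) (openn 0 c A')" by (simp add: Rf_def)
  qed (rule X(1))
qed auto

lemma lift: "is_atom X \<Longrightarrow> Rf S sa sb G X X' \<Longrightarrow> has_ty S G sa (NTy v) \<Longrightarrow> has_ty S G sb (NTy v) \<Longrightarrow>
  der S G (Gam + ext X X' + {#X#}) Del n \<Longrightarrow> der S G (Gam + {#X'#}) Del n"
proof (cases "X' = X")
  case False
  assume a: "is_atom X" "Rf S sa sb G X X'" "has_ty S G sa (NTy v)" "has_ty S G sb (NTy v)"
    "der S G (Gam + ext X X' + {#X#}) Del n"
  hence X: "X = fswap sa sb X'" "wf_fm S G X'" using False by (auto simp: Rf_def)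
  show ?thesis
    by (rule der.E3[OF _ X(2) a(3) a(4)]) (use a(1,5) X False in \<open>auto simp: ext_def add_mset_commute\<close>)
qed (auto simp: ext_def)

lemma atom_subst_at: "is_atom P \<Longrightarrow> is_atom (subst_at x t P)" by (cases P) auto




lemma relD1: "rel_mset Q (M + {#x#}) N \<Longrightarrow> \<exists>N' y. N = add_mset y N' \<and> Q x y \<and> rel_mset Q M N'"
  using msed_rel_invL by fastforce
lemma relD2: "rel_mset Q (M + {#x, y#}) N \<Longrightarrow>
  \<exists>N' x' y'. N = add_mset x' (add_mset y' N') \<and> Q x x' \<and> Q y y' \<and> rel_mset Q M N'"
proof -
  assume "rel_mset Q (M + {#x, y#}) N"
  hence "rel_mset Q (add_mset x (add_mset y M)) N" by simp
  from msed_rel_invL[OF this] obtain N1 x' where "N = add_mset x' N1" "Q x x'" "rel_mset Q (add_mset y M) N1" by blast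
  moreover from msed_rel_invL[OF this(3)] obtain N2 y' where "N1 = add_mset y' N2" "Q y y'" "rel_mset Q M N2" by blast
  ultimately show ?thesis by blast
qed

context fixes S :: sig and sa sb :: trm and sv :: nat
begin

lemma main: "der S G Gm Dl n \<Longrightarrow> has_ty S G sa (NTy sv) \<Longrightarrow> has_ty S G sb (NTy sv) \<Longrightarrow>
  rel_mset (Rf S sa sb G) Gm G0 \<Longrightarrow> rel_mset (Rf S sa sb G) Dl D0 \<Longrightarrow> okw G W \<Longrightarrow>
  der S G (G0 + W) D0 n"
proof (induction arbitrary: G0 D0 W rule: der.induct)
  case (Init P G Gam Del n)
  obtain G1 P1 where g: "G0 = add_mset P1 G1" "Rf S sa sb G P P1" using relD1[OF Init.prems(3)] by blast
  obtain D1 P2 where d: "D0 = add_mset P2 D1" "Rf S sa sb G P P2" using relD1[OF Init.prems(4)] by blast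
  have "der S G (G1 + W + ext P P1 + {#P#}) (D1 + {#P2#}) n"
  proof (cases "P2 = P")
    case True thus ?thesis using Init.hyps by (auto intro: Init')
  next
    case False
    hence "P = fswap sa sb P2" "wf_fm S G P2" using d(2) by (auto simp: Rf_def)
    thus ?thesis using ds[of P2 S G sa sv sb "G1 + W + ext P P1" D1 n] Init.hyps Init.prems(1,2) by auto
  qed
  from lift[OF Init.hyps g(2) Init.prems(1,2) this] show ?case using g d by simp
next
  case (TopR G Gam Del n)
  obtain D1 X where d: "D0 = add_mset X D1" "Rf S sa sb G Top X" using relD1[OF TopR.prems(4)] by blast
  thus ?case using der.TopR[of S G "G0 + W" D1 n] Rf_Top[OF d(2)] by simp
next
  case (BotL G Gam Del n)
  obtain G1 X where g: "G0 = add_mset X G1" "Rf S sa sb G Bot X" using relD1[OF BotL.prems(3)] by blast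
  thus ?case using der.BotL[of S G "G1 + W" D0 n] Rf_Bot[OF g(2)] by simp
next
  case (AndL G Gam A B Del n)
  obtain G1 X where g: "G0 = add_mset X G1" "Rf S sa sb G (And A B) X" "rel_mset (Rf S sa sb G) Gam G1"
    using relD1[OF AndL.prems(3)] by blast
  obtain A' B' where x: "X = And A' B'" "Rf S sa sb G A A'" "Rf S sa sb G B B'" using Rf_And[OF g(2)] by blast
  have "der S G (G1 + {#A', B'#} + W) D0 n"
    by (rule AndL.IH) (use AndL.prems g x in \<open>simp_all add: rel_mset_Plus\<close>)
  hence "der S G (G1 + W + {#A', B'#}) D0 n" by simp
  from der.AndL[OF this] show ?case using g x by simp
next
  case (AndR G Gam Del A n B)
  obtain D1 X where d: "D0 = add_mset X D1" "Rf S sa sb G (And A B) X" "rel_mset (Rf S sa sb G) Del D1"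
    using relD1[OF AndR.prems(4)] by blast
  obtain A' B' where x: "X = And A' B'" "Rf S sa sb G A A'" "Rf S sa sb G B B'" using Rf_And[OF d(2)] by blast
  have "der S G (G0 + W) (D1 + {#A'#}) n"
    by (rule AndR.IH(1)) (use AndR.prems d x in \<open>simp_all add: rel_mset_Plus\<close>)
  moreover have "der S G (G0 + W) (D1 + {#B'#}) n"
    by (rule AndR.IH(2)) (use AndR.prems d x in \<open>simp_all add: rel_mset_Plus\<close>)
  ultimately show ?case using der.AndR d x by simp
next
  case (OrL G Gam A Del n B)
  obtain G1 X where g: "G0 = add_mset X G1" "Rf S sa sb G (Or A B) X" "rel_mset (Rf S sa sb G) Gam G1"
    using relD1[OF OrL.prems(3)] by blast
  obtain A' B' where x: "X = Or A' B'" "Rf S sa sb G A A'" "Rf S sa sb G B B'" using Rf_Or[OF g(2)] by blast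
  have "der S G (G1 + {#A'#} + W) D0 n"
    by (rule OrL.IH(1)) (use OrL.prems g x in \<open>simp_all add: rel_mset_Plus\<close>)
  moreover have "der S G (G1 + {#B'#} + W) D0 n"
    by (rule OrL.IH(2)) (use OrL.prems g x in \<open>simp_all add: rel_mset_Plus\<close>)
  ultimately have "der S G (G1 + W + {#Or A' B'#}) D0 (Suc n)" by (intro der.OrL) simp_all
  thus ?case using g x by simp
next
  case (OrR G Gam Del A B n)
  obtain D1 X where d: "D0 = add_mset X D1" "Rf S sa sb G (Or A B) X" "rel_mset (Rf S sa sb G) Del D1"
    using relD1[OF OrR.prems(4)] by blast
  obtain A' B' where x: "X = Or A' B'" "Rf S sa sb G A A'" "Rf S sa sb G B B'" using Rf_Or[OF d(2)] by blast
  have "der S G (G0 + W) (D1 + {#A', B'#}) n"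
    by (rule OrR.IH) (use OrR.prems d x in \<open>simp_all add: rel_mset_Plus\<close>)
  thus ?case using der.OrR d x by simp
next
  case (ImpL G Gam Del A n B)
  obtain G1 X where g: "G0 = add_mset X G1" "Rf S sa sb G (Imp A B) X" "rel_mset (Rf S sa sb G) Gam G1"
    using relD1[OF ImpL.prems(3)] by blast
  obtain A' B' where x: "X = Imp A' B'" "Rf S sa sb G A A'" "Rf S sa sb G B B'" using Rf_Imp[OF g(2)] by blast
  have "der S G (G1 + W) (D0 + {#A'#}) n"
    by (rule ImpL.IH(1)) (use ImpL.prems g x in \<open>simp_all add: rel_mset_Plus\<close>)
  moreover have "der S G (G1 + {#B'#} + W) D0 n"
    by (rule ImpL.IH(2)) (use ImpL.prems g x in \<open>simp_all add: rel_mset_Plus\<close>)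
  ultimately have "der S G (G1 + W + {#Imp A' B'#}) D0 (Suc n)" by (intro der.ImpL) simp_all
  thus ?case using g x by simp
next
  case (ImpR G Gam A Del B n)
  obtain D1 X where d: "D0 = add_mset X D1" "Rf S sa sb G (Imp A B) X" "rel_mset (Rf S sa sb G) Del D1"
    using relD1[OF ImpR.prems(4)] by blast
  obtain A' B' where x: "X = Imp A' B'" "Rf S sa sb G A A'" "Rf S sa sb G B B'" using Rf_Imp[OF d(2)] by blast
  have "der S G (G0 + {#A'#} + W) (D1 + {#B'#}) n"
    by (rule ImpR.IH) (use ImpR.prems d x in \<open>simp_all add: rel_mset_Plus\<close>)
  hence "der S G (G0 + W + {#A'#}) (D1 + {#B'#}) n" by simp
  thus ?case using der.ImpR d x by simp
next
  case (AllL G t T Gam A Del n)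
  obtain G1 X where g: "G0 = add_mset X G1" "Rf S sa sb G (All T A) X" "rel_mset (Rf S sa sb G) Gam G1"
    using relD1[OF AllL.prems(3)] by blast
  obtain A' where x: "X = All T A'" "Rf S sa sb G (openv 0 t A) (openv 0 t A')"
    using Rf_All[OF g(2) AllL.prems(1,2)] AllL.hyps(1) by blast
  have "der S G (G1 + {#All T A', openv 0 t A'#} + W) D0 n"
    by (rule AllL.IH) (use AllL.prems g x in \<open>simp_all add: rel_mset_Plus\<close>)
  hence "der S G (G1 + W + {#All T A', openv 0 t A'#}) D0 n" by simp
  from der.AllL[OF AllL.hyps(1) this] show ?case using g x by simp
next
  case (ExR G t T Gam Del A n)
  obtain D1 X where d: "D0 = add_mset X D1" "Rf S sa sb G (Ex T A) X" "rel_mset (Rf S sa sb G) Del D1"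
    using relD1[OF ExR.prems(4)] by blast
  obtain A' where x: "X = Ex T A'" "Rf S sa sb G (openv 0 t A) (openv 0 t A')"
    using Rf_Ex[OF d(2) ExR.prems(1,2)] ExR.hyps(1) by blast
  have "der S G (G0 + W) (D1 + {#Ex T A', openv 0 t A'#}) n"
    by (rule ExR.IH) (use ExR.prems d x in \<open>simp_all add: rel_mset_Plus\<close>)
  from der.ExR[OF ExR.hyps(1) this] show ?case using d x by simp
next
  case (AllR y G Gam Del A T n)
  obtain D1 X where d: "D0 = add_mset X D1" "Rf S sa sb G (All T A) X" "rel_mset (Rf S sa sb G) Del D1"
    using relD1[OF AllR.prems(4)] by blast
  obtain A' where x: "X = All T A'" "\<And>G2 t. set G \<subseteq> set G2 \<Longrightarrow> has_ty S G2 t T \<Longrightarrow> Rf S sa sb G2 (openv 0 t A) (openv 0 t A')"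
    using Rf_All[OF d(2) AllR.prems(1,2)] by blast
  let ?G = "G @ [CVar y T]"
  have sub: "set G \<subseteq> set ?G" by auto
  have ty: "has_ty S ?G (FV y) T" by (auto intro: has_ty.typ_FV)
  have "der S ?G (G0 + W) (D1 + {#openv 0 (FV y) A'#}) n"
  proof (rule AllR.IH)
    show "rel_mset (Rf S sa sb ?G) (Del + {#openv 0 (FV y) A#}) (D1 + {#openv 0 (FV y) A'#})"
      using rel_mono[OF d(3) sub] x(2)[OF sub ty] by (simp add: rel_mset_Plus)
  qed (use AllR.prems sub in \<open>auto intro: has_ty_mono rel_mono okw_mono\<close>)
  moreover have fr: "y \<notin> fv_ms (G0 + W)" "y \<notin> fv_ms D1" "y \<notin> fv_f A'"
    using rel_fv[OF AllR.prems(3)] rel_fv[OF d(3)] okw_fv[OF AllR.prems(5)] AllR.hyps Rf_fv[OF d(2)] x(1) by auto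
  ultimately show ?case using der.AllR[OF AllR.hyps(1) fr(1) fr(2) fr(3)] d x by simp
next
  case (ExL y G Gam Del A T n)
  obtain G1 X where g: "G0 = add_mset X G1" "Rf S sa sb G (Ex T A) X" "rel_mset (Rf S sa sb G) Gam G1"
    using relD1[OF ExL.prems(3)] by blast
  obtain A' where x: "X = Ex T A'" "\<And>G2 t. set G \<subseteq> set G2 \<Longrightarrow> has_ty S G2 t T \<Longrightarrow> Rf S sa sb G2 (openv 0 t A) (openv 0 t A')"
    using Rf_Ex[OF g(2) ExL.prems(1,2)] by blast
  let ?G = "G @ [CVar y T]"
  have sub: "set G \<subseteq> set ?G" by auto
  have ty: "has_ty S ?G (FV y) T" by (auto intro: has_ty.typ_FV)
  have "der S ?G (G1 + {#openv 0 (FV y) A'#} + W) D0 n"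
  proof (rule ExL.IH)
    show "rel_mset (Rf S sa sb ?G) (Gam + {#openv 0 (FV y) A#}) (G1 + {#openv 0 (FV y) A'#})"
      using rel_mono[OF g(3) sub] x(2)[OF sub ty] by (simp add: rel_mset_Plus)
  qed (use ExL.prems sub in \<open>auto intro: has_ty_mono rel_mono okw_mono\<close>)
  hence "der S ?G (G1 + W + {#openv 0 (FV y) A'#}) D0 n" by simp
  moreover have fr: "y \<notin> fv_ms (G1 + W)" "y \<notin> fv_ms D0" "y \<notin> fv_f A'"
    using rel_fv[OF g(3)] rel_fv[OF ExL.prems(4)] okw_fv[OF ExL.prems(5)] ExL.hyps Rf_fv[OF g(2)] x(1) by auto
  ultimately show ?case using der.ExL[OF ExL.hyps(1) fr(1) fr(2) fr(3)] g x by simp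
next
  case (NR a G Gam Del A v n)
  obtain D1 X where d: "D0 = add_mset X D1" "Rf S sa sb G (New v A) X" "rel_mset (Rf S sa sb G) Del D1"
    using relD1[OF NR.prems(4)] by blast
  obtain A' where x: "X = New v A'" "Rf S sa sb (G @ [CName a v]) (openn 0 a A) (openn 0 a A')"
    using Rf_New[OF d(2) NR.prems(1,2)] NR.hyps(1) by blast
  let ?G = "G @ [CName a v]"
  have sub: "set G \<subseteq> set ?G" by auto
  have "der S ?G (G0 + W) (D1 + {#openn 0 a A'#}) n"
  proof (rule NR.IH)
    show "rel_mset (Rf S sa sb ?G) (Del + {#openn 0 a A#}) (D1 + {#openn 0 a A'#})"
      using rel_mono[OF d(3) sub] x(2) by (simp add: rel_mset_Plus)
  qed (use NR.prems sub in \<open>auto intro: has_ty_mono rel_mono okw_mono\<close>)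
  moreover have fr: "a \<notin> fn_ms (G0 + W)" "a \<notin> fn_ms D1" "a \<notin> fn_f A'"
    using rel_fv[OF NR.prems(3)] rel_fv[OF d(3)] okw_fv[OF NR.prems(5)] NR.hyps Rf_fv[OF d(2)] x(1) by auto
  ultimately show ?case using der.NR[OF NR.hyps(1) fr(1) fr(2) fr(3)] d x by simp
next
  case (NL a G Gam Del A v n)
  obtain G1 X where g: "G0 = add_mset X G1" "Rf S sa sb G (New v A) X" "rel_mset (Rf S sa sb G) Gam G1"
    using relD1[OF NL.prems(3)] by blast
  obtain A' where x: "X = New v A'" "Rf S sa sb (G @ [CName a v]) (openn 0 a A) (openn 0 a A')"
    using Rf_New[OF g(2) NL.prems(1,2)] NL.hyps(1) by blast
  let ?G = "G @ [CName a v]"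
  have sub: "set G \<subseteq> set ?G" by auto
  have "der S ?G (G1 + {#openn 0 a A'#} + W) D0 n"
  proof (rule NL.IH)
    show "rel_mset (Rf S sa sb ?G) (Gam + {#openn 0 a A#}) (G1 + {#openn 0 a A'#})"
      using rel_mono[OF g(3) sub] x(2) by (simp add: rel_mset_Plus)
  qed (use NL.prems sub in \<open>auto intro: has_ty_mono rel_mono okw_mono\<close>)
  hence "der S ?G (G1 + W + {#openn 0 a A'#}) D0 n" by simp
  moreover have fr: "a \<notin> fn_ms (G1 + W)" "a \<notin> fn_ms D0" "a \<notin> fn_f A'"
    using rel_fv[OF g(3)] rel_fv[OF NL.prems(4)] okw_fv[OF NL.prems(5)] NL.hyps Rf_fv[OF g(2)] x(1) by auto
  ultimately show ?case using der.NL[OF NL.hyps(1) fr(1) fr(2) fr(3)] g x by simp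

next
  case (EqR G t T Gam Del n)
  have "der S G (G0 + {#Eq t t#} + W) D0 n"
    by (rule EqR.IH) (use EqR.prems in \<open>simp_all add: rel_mset_Plus\<close>)
  hence "der S G (G0 + W + {#Eq t t#}) D0 n" by simp
  from der.EqR[OF EqR.hyps(1) this] show ?case .
next
  case (S1 G a v x T Gam Del n)
  have "der S G (G0 + {#Eq (Swp a a x) x#} + W) D0 n"
    by (rule S1.IH) (use S1.prems in \<open>simp_all add: rel_mset_Plus\<close>)
  hence "der S G (G0 + W + {#Eq (Swp a a x) x#}) D0 n" by simp
  from der.S1[OF S1.hyps(1) S1.hyps(2) this] show ?case .
next
  case (S2 G a v b x T Gam Del n)
  have "der S G (G0 + {#Eq (Swp a b (Swp a b x)) x#} + W) D0 n"
    by (rule S2.IH) (use S2.prems in \<open>simp_all add: rel_mset_Plus\<close>)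
  hence "der S G (G0 + W + {#Eq (Swp a b (Swp a b x)) x#}) D0 n" by simp
  from der.S2[OF S2.hyps(1) S2.hyps(2) S2.hyps(3) this] show ?case .
next
  case (S3 G a v b Gam Del n)
  have "der S G (G0 + {#Eq (Swp a b a) b#} + W) D0 n"
    by (rule S3.IH) (use S3.prems in \<open>simp_all add: rel_mset_Plus\<close>)
  hence "der S G (G0 + W + {#Eq (Swp a b a) b#}) D0 n" by simp
  from der.S3[OF S3.hyps(1) S3.hyps(2) this] show ?case .
next
  case (E1 G a v b Gam c Del n)
  have "der S G (G0 + {#Eq (Swp a b (Cst c)) (Cst c)#} + W) D0 n"
    by (rule E1.IH) (use E1.prems in \<open>simp_all add: rel_mset_Plus\<close>)
  hence "der S G (G0 + W + {#Eq (Swp a b (Cst c)) (Cst c)#}) D0 n" by simp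
  from der.E1[OF E1.hyps(1) E1.hyps(2) this] show ?case .
next
  case (E2 G a v b f ts T Gam Del n)
  have "der S G (G0 + {#Eq (Swp a b (Fn f ts)) (Fn f (map (Swp a b) ts))#} + W) D0 n"
    by (rule E2.IH) (use E2.prems in \<open>simp_all add: rel_mset_Plus\<close>)
  hence "der S G (G0 + W + {#Eq (Swp a b (Fn f ts)) (Fn f (map (Swp a b) ts))#}) D0 n" by simp
  from der.E2[OF E2.hyps(1) E2.hyps(2) E2.hyps(3) this] show ?case .
next
  case (E2_swap G a v b c d t T Gam Del n)
  have "der S G (G0 + {#Eq (Swp a b (Swp c d t)) (Swp (Swp a b c) (Swp a b d) (Swp a b t))#} + W) D0 n"
    by (rule E2_swap.IH) (use E2_swap.prems in \<open>simp_all add: rel_mset_Plus\<close>)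
  hence "der S G (G0 + W + {#Eq (Swp a b (Swp c d t)) (Swp (Swp a b c) (Swp a b d) (Swp a b t))#}) D0 n" by simp
  from der.E2_swap[OF E2_swap.hyps(1) E2_swap.hyps(2) E2_swap.hyps(3) this] show ?case .
next
  case (E2_abs G a v b c t T Gam Del n)
  have "der S G (G0 + {#Eq (Swp a b (Abst c t)) (Abst (Swp a b c) (Swp a b t))#} + W) D0 n"
    by (rule E2_abs.IH) (use E2_abs.prems in \<open>simp_all add: rel_mset_Plus\<close>)
  hence "der S G (G0 + W + {#Eq (Swp a b (Abst c t)) (Abst (Swp a b c) (Swp a b t))#}) D0 n" by simp
  from der.E2_abs[OF E2_abs.hyps(1) E2_abs.hyps(2) E2_abs.hyps(3) this] show ?case .
next
  case (F2 G a v b w Gam Del n)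
  have "der S G (G0 + {#Fr a b#} + W) D0 n"
    by (rule F2.IH) (use F2.prems in \<open>simp_all add: rel_mset_Plus\<close>)
  hence "der S G (G0 + W + {#Fr a b#}) D0 n" by simp
  from der.F2[OF F2.hyps(1) F2.hyps(2) F2.hyps(3) this] show ?case .
next
  case (CtxFresh a t G Gam Del n)
  have "der S G (G0 + {#Fr (NS a) t#} + W) D0 n"
    by (rule CtxFresh.IH) (use CtxFresh.prems in \<open>simp_all add: rel_mset_Plus\<close>)
  hence "der S G (G0 + W + {#Fr (NS a) t#}) D0 n" by simp
  from der.CtxFresh[OF CtxFresh.hyps(1) this] show ?case .
next
  case (F4 G a v b Gam Del n)
  have "der S G (G0 + {#Fr a b#} + W) D0 n"
    by (rule F4.IH(1)) (use F4.prems in \<open>simp_all add: rel_mset_Plus\<close>)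
  moreover have "der S G (G0 + {#Eq a b#} + W) D0 n"
    by (rule F4.IH(2)) (use F4.prems in \<open>simp_all add: rel_mset_Plus\<close>)
  ultimately show ?case using der.F4[OF F4.hyps(1,2), of "G0 + W" D0 n] by simp
next
  case (A3 G t v T a x Gam Del n)
  let ?G = "G @ [CVar a (NTy v), CVar x T]"
  have sub: "set G \<subseteq> set ?G" by auto
  have "der S ?G (G0 + {#Eq t (Abst (FV a) (FV x))#} + W) D0 n"
  proof (rule A3.IH)
    show "rel_mset (Rf S sa sb ?G) (Gam + {#Eq t (Abst (FV a) (FV x))#}) (G0 + {#Eq t (Abst (FV a) (FV x))#})"
      using rel_mono[OF A3.prems(3) sub] by (simp add: rel_mset_Plus)
  qed (use A3.prems sub in \<open>auto intro: has_ty_mono rel_mono okw_mono\<close>)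
  hence "der S ?G (G0 + W + {#Eq t (Abst (FV a) (FV x))#}) D0 n" by simp
  moreover have "a \<notin> fv_ms (G0 + W) \<union> fv_ms D0" "x \<notin> fv_ms (G0 + W) \<union> fv_ms D0"
    using rel_fv[OF A3.prems(3)] rel_fv[OF A3.prems(4)] okw_fv[OF A3.prems(5)] A3.hyps by auto
  ultimately show ?case using der.A3[OF A3.hyps(1-4)] by blast
next
  case (F a G Gam Del v n)
  let ?G = "G @ [CName a v]"
  have sub: "set G \<subseteq> set ?G" by auto
  have "der S ?G (G0 + W) D0 n"
    by (rule F.IH) (use F.prems sub in \<open>auto intro: has_ty_mono rel_mono okw_mono\<close>)
  moreover have "a \<notin> fn_ms (G0 + W)" "a \<notin> fn_ms D0"
    using rel_fv[OF F.prems(3)] rel_fv[OF F.prems(4)] okw_fv[OF F.prems(5)] F.hyps by auto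
  ultimately show ?case using der.F[OF F.hyps(1)] by blast
next
  case (F3 G a v Gam Del n)
  obtain G1 X where g: "G0 = add_mset X G1" "Rf S sa sb G (Fr a a) X" using relD1[OF F3.prems(3)] by blast
  have "der S G (G1 + W + ext (Fr a a) X + {#Fr a a#}) D0 n" by (rule der.F3[OF F3.hyps])
  from lift[OF _ g(2) F3.prems(1,2) this] show ?case using g by simp
next
  case (E3 P G a v b Gam Del n)
  obtain G1 X where g: "G0 = add_mset X G1" "Rf S sa sb G P X" "rel_mset (Rf S sa sb G) Gam G1"
    using relD1[OF E3.prems(3)] by blast
  let ?W = "W + ext P X"
  have "der S G (G1 + {#P, fswap a b P#} + ?W) D0 n"
    by (rule E3.IH) (use E3.prems g okw_ext in \<open>simp_all add: rel_mset_Plus\<close>)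
  hence "der S G (G1 + ?W + {#P, fswap a b P#}) D0 n" by simp
  from der.E3[OF E3.hyps(1-4) this] have "der S G (G1 + W + ext P X + {#P#}) D0 n" by (simp add: ac_simps add_mset_commute)
  from lift[OF E3.hyps(1) g(2) E3.prems(1,2) this] show ?case using g by simp
next
  case (EqS P G Gam t u x Del n)
  obtain G1 E' Q' where g: "G0 = add_mset E' (add_mset Q' G1)" "Rf S sa sb G (Eq t u) E'"
     "Rf S sa sb G (subst_at x t P) Q'" "rel_mset (Rf S sa sb G) Gam G1"
    using relD2[OF EqS.prems(3)] by blast
  let ?W = "W + ext (Eq t u) E' + ext (subst_at x t P) Q'"
  have "okw G ?W" using okw_ext EqS.prems(5) g by blast
  hence "der S G (G1 + {#Eq t u, subst_at x t P, subst_at x u P#} + ?W) D0 n"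
    by (intro EqS.IH) (use EqS.prems g in \<open>simp_all add: rel_mset_Plus\<close>)
  hence "der S G (G1 + ?W + {#Eq t u, subst_at x t P, subst_at x u P#}) D0 n" by simp
  from der.EqS[OF EqS.hyps(1) this]
  have "der S G ((G1 + W + ext (Eq t u) E' + {#Eq t u#}) + ext (subst_at x t P) Q' + {#subst_at x t P#}) D0 n"
    by (simp add: ac_simps add_mset_commute)
  from lift[OF atom_subst_at[OF EqS.hyps(1)] g(3) EqS.prems(1,2) this]
  have "der S G ((G1 + W + {#Q'#}) + ext (Eq t u) E' + {#Eq t u#}) D0 n" by (simp add: ac_simps add_mset_commute)
  from lift[OF _ g(2) EqS.prems(1,2) this] show ?case using g by (simp add: ac_simps add_mset_commute)
next
  case (F1 G a v b x T Gam Del n)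
  obtain G1 E' Q' where g: "G0 = add_mset E' (add_mset Q' G1)" "Rf S sa sb G (Fr a x) E'"
     "Rf S sa sb G (Fr b x) Q'" "rel_mset (Rf S sa sb G) Gam G1"
    using relD2[OF F1.prems(3)] by blast
  let ?W = "W + ext (Fr a x) E' + ext (Fr b x) Q'"
  have "okw G ?W" using okw_ext F1.prems(5) g by blast
  hence "der S G (G1 + {#Fr a x, Fr b x, Eq (Swp a b x) x#} + ?W) D0 n"
    by (intro F1.IH) (use F1.prems g in \<open>simp_all add: rel_mset_Plus\<close>)
  hence "der S G (G1 + ?W + {#Fr a x, Fr b x, Eq (Swp a b x) x#}) D0 n" by simp
  from der.F1[OF F1.hyps(1-3) this]
  have "der S G ((G1 + W + ext (Fr a x) E' + {#Fr a x#}) + ext (Fr b x) Q' + {#Fr b x#}) D0 n"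
    by (simp add: ac_simps add_mset_commute)
  from lift[OF _ g(3) F1.prems(1,2) this]
  have "der S G ((G1 + W + {#Q'#}) + ext (Fr a x) E' + {#Fr a x#}) D0 n" by (simp add: ac_simps add_mset_commute)
  from lift[OF _ g(2) F1.prems(1,2) this] show ?case using g by (simp add: ac_simps add_mset_commute)
next
  case (A1 G a v b x T y Gam Del n)
  obtain G1 E' Q' where g: "G0 = add_mset E' (add_mset Q' G1)" "Rf S sa sb G (Fr a y) E'"
     "Rf S sa sb G (Eq x (Swp a b y)) Q'" "rel_mset (Rf S sa sb G) Gam G1"
    using relD2[OF A1.prems(3)] by blast
  let ?W = "W + ext (Fr a y) E' + ext (Eq x (Swp a b y)) Q'"
  have "okw G ?W" using okw_ext A1.prems(5) g by blast
  hence "der S G (G1 + {#Fr a y, Eq x (Swp a b y), Eq (Abst a x) (Abst b y)#} + ?W) D0 n"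
    by (intro A1.IH) (use A1.prems g in \<open>simp_all add: rel_mset_Plus\<close>)
  hence "der S G (G1 + ?W + {#Fr a y, Eq x (Swp a b y), Eq (Abst a x) (Abst b y)#}) D0 n" by simp
  from der.A1[OF A1.hyps(1-4) this]
  have "der S G ((G1 + W + ext (Fr a y) E' + {#Fr a y#}) + ext (Eq x (Swp a b y)) Q' + {#Eq x (Swp a b y)#}) D0 n"
    by (simp add: ac_simps add_mset_commute)
  from lift[OF _ g(3) A1.prems(1,2) this]
  have "der S G ((G1 + W + {#Q'#}) + ext (Fr a y) E' + {#Fr a y#}) D0 n" by (simp add: ac_simps add_mset_commute)
  from lift[OF _ g(2) A1.prems(1,2) this] show ?case using g by (simp add: ac_simps add_mset_commute)
next
  case (A2 G Gam a t b u Del n)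
  let ?E = "Eq (Abst a t) (Abst b u)"
  obtain G1 X where g: "G0 = add_mset X G1" "Rf S sa sb G ?E X" "rel_mset (Rf S sa sb G) Gam G1"
    using relD1[OF A2.prems(3)] by blast
  let ?W = "W + ext ?E X"
  have ok: "okw G ?W" using okw_ext A2.prems(5) g by blast
  have "der S G (G1 + {#?E, Eq a b, Eq t u#} + ?W) D0 n"
    by (rule A2.IH(1)) (use A2.prems g ok in \<open>simp_all add: rel_mset_Plus\<close>)
  hence 1: "der S G (G1 + ?W + {#?E, Eq a b, Eq t u#}) D0 n" by simp
  have "der S G (G1 + {#?E, Fr a u, Eq t (Swp a b u)#} + ?W) D0 n"
    by (rule A2.IH(2)) (use A2.prems g ok in \<open>simp_all add: rel_mset_Plus\<close>)
  hence 2: "der S G (G1 + ?W + {#?E, Fr a u, Eq t (Swp a b u)#}) D0 n" by simp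
  from der.A2[OF 1 2] have "der S G (G1 + W + ext ?E X + {#?E#}) D0 n" by (simp add: ac_simps add_mset_commute)
  from lift[OF _ g(2) A2.prems(1,2) this] show ?case using g by simp
qed

end


lemma Rf_swap: "wf_fm S G \<phi> \<Longrightarrow> Rf S a b G (fswap a b \<phi>) \<phi>" by (simp add: Rf_def)
lemma okw_empty: "okw G {#}" by (simp add: okw_def)

theorem mainTheorem17:
  fixes S :: sig and G :: ctx and \<phi> :: fm and a b :: trm and v :: nat
    and \<Gamma> \<Delta> :: "fm multiset" and n :: nat
  assumes "ctx_ok G"
    and "wf_fm S G \<phi>"
    and "has_ty S G a (NTy v)" and "has_ty S G b (NTy v)"
  shows "(der S G (\<Gamma> + {#fswap a b \<phi>#}) \<Delta> n \<longrightarrow> der S G (\<Gamma> + {#\<phi>#}) \<Delta> n)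
       \<and> (der S G \<Gamma> (\<Delta> + {#fswap a b \<phi>#}) n \<longrightarrow> der S G \<Gamma> (\<Delta> + {#\<phi>#}) n)"
proof (intro conjI impI)
  have r1: "rel_mset (Rf S a b G) (\<Gamma> + {#fswap a b \<phi>#}) (\<Gamma> + {#\<phi>#})"
    using rel_mset_Plus[OF Rf_swap[OF assms(2)] rel_refl[of S a b G \<Gamma>]] by simp
  have r2: "rel_mset (Rf S a b G) (\<Delta> + {#fswap a b \<phi>#}) (\<Delta> + {#\<phi>#})"
    using rel_mset_Plus[OF Rf_swap[OF assms(2)] rel_refl[of S a b G \<Delta>]] by simp
  show "der S G (\<Gamma> + {#\<phi>#}) \<Delta> n" if d: "der S G (\<Gamma> + {#fswap a b \<phi>#}) \<Delta> n"
    using main[OF d assms(3) assms(4) r1 rel_refl okw_empty] by simp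
  show "der S G \<Gamma> (\<Delta> + {#\<phi>#}) n" if d: "der S G \<Gamma> (\<Delta> + {#fswap a b \<phi>#}) n"
    using main[OF d assms(3) assms(4) rel_refl r2 okw_empty] by simp
qed

end
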